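(* Let $\mathcal{C}\subset\mathbb{R}^n$ be a nonempty compact convex set with Euclidean diameter $D$, let $f$ be continuously differentiable with $\nabla f$ $L$-Lipschitz on $\mathcal{C}$, $f^\star=\min_{\mathcal{C}}f$, $F_0=f(x^0)-f^\star$. Assume the stochastic gradients are unbiased with variance bounded by $\sigma^2$ (see context). Let $\{x^t\}_{t=0}^T$ ($T\ge1$) be generated by the Boosted Stochastic Frank–Wolfe algorithm described in the context with the Heavy Ball estimator, where for all $t$, $\eta_t=\frac{1}{(t+2)^{3/4}}$ and $\tilde\rho_t=\frac{1}{\sqrt{t+1}}$. Let $M_h=\max\{\|\Delta^0\|^2,\ 24(\sigma^2+2L^2D^2)\}$, with $\Delta^0=m^0-\nabla f(x^0)$. Then $$\mathbb{E}\Big[\min_{0\le t\le T-1}\mathrm{Gap}(x^t)\Big]\le\frac{F_0+2D\sqrt{M_h}\,(1+\ln T)+LD^2}{4\big((T+2)^{1/4}-2^{1/4}\big)}.$$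
   Context: Euclidean norms; $D=\max_{x,y\in\mathcal{C}}\|x-y\|$; $\mathrm{Gap}(x)=\max_{s\in\mathcal{C}}\langle\nabla f(x),x-s\rangle$. $\mathrm{lmo}(v)$ denotes a (fixed selection of a) point of $\arg\min_{s\in\mathcal{C}}\langle s,v\rangle$. $\mathrm{align}(d,\hat d)=\frac{\langle d,\hat d\rangle}{\|d\|\|\hat d\|}$ if $\hat d\ne0$, $-1$ if $\hat d=0$. $\mathbb{E}$ full expectation; $\mathbb{E}_t[\cdot]=\mathbb{E}[\cdot\mid\sigma(x^0,\dots,x^t)]$. Heavy Ball estimator: at iteration $t$ a sample $\xi_t$ is drawn and a stochastic gradient $\tilde\nabla f(x^t,\xi_t)$ computed, with $\mathbb{E}_{t-1}[\tilde\nabla f(x^t,\xi_t)]=\nabla f(x^t)$ and $\mathbb{E}\|\tilde\nabla f(x,\xi)-\nabla f(x)\|^2\le\sigma^2$ for all $x$; the estimator is $m^0=0$ and $m^t=(1-\tilde\rho_t)m^{t-1}+\tilde\rho_t\tilde\nabla f(x^t,\xi_t)$ for $t\ge1$. Algorithm: inputs $K\ge1$, $\delta\in(0,1]$, step decays $\eta_t>0$, a vector $m^{\rm init}$; $x^0=\mathrm{lmo}(m^{\rm init})$. At iteration $t$ the estimator $m^t$ is formed. Boosting: $\psi^0=0$, $\Lambda_t=0$, $k=0$; while $k\le K-1$: $r^k=-m^t-\psi^k$, $v^k=\mathrm{lmo}(-r^k)$; if $k=0$, $s^t=v^0$; if $\psi^k\ne0$, $u^k$ is whichever of $v^k-x^t$,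 $-\psi^k/\|\psi^k\|$ has the larger inner product with $r^k$, else $u^k=v^k-x^t$; if $u^k=0$ stop; $\lambda_k=\langle r^k,u^k\rangle/\|u^k\|^2$, $\phi^k=\psi^k+\lambda_ku^k$; if $\mathrm{align}(-m^t,\phi^k)-\mathrm{align}(-m^t,\psi^k)\ge\delta$ then $\psi^{k+1}=\phi^k$, $\Lambda_t\leftarrow\Lambda_t+\lambda_k$ if $u^k=v^k-x^t$ and $\Lambda_t\leftarrow\Lambda_t(1-\lambda_k/\|\psi^k\|)$ otherwise, $k\leftarrow k+1$; else stop. With $\psi$ the last accepted candidate, $\tilde d^t=\psi/\Lambda_t$ if $\Lambda_t\ne0$, else $0$. $\gamma_t=\min\{\eta_t\|s^t-x^t\|/\|\tilde d^t\|,1\}$ if $\tilde d^t\ne0$, else $1$. If $\gamma_t<1$: $x^{t+1}=x^t+\gamma_t\tilde d^t$; otherwise $x^{t+1}=x^t+\eta_t(s^t-x^t)$. *)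

theory Defs
  imports "HOL-Probability.Probability"
begin

definition align :: "'v::real_inner \<Rightarrow> 'v \<Rightarrow> real" where
  "align d dh = (if dh \<noteq> 0 then inner d dh / (norm d * norm dh) else -1)"

definition fw_gap :: "'v::real_inner set \<Rightarrow> ('v \<Rightarrow> 'v) \<Rightarrow> 'v \<Rightarrow> real" where
  "fw_gap C grad x = (SUP s\<in>C. inner (grad x) (x - s))"

primrec boost_loop :: "('v::real_inner \<Rightarrow> 'v) \<Rightarrow> real \<Rightarrow> 'v \<Rightarrow> 'v \<Rightarrow> nat \<Rightarrow> 'v \<Rightarrow> real \<Rightarrow> 'v \<times> real" where
  "boost_loop lmo \<delta> m x 0 \<psi> \<Lambda> = (\<psi>, \<Lambda>)"
| "boost_loop lmo \<delta> m x (Suc n) \<psi> \<Lambda> =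
     (let r = - m - \<psi>;
          v = lmo (- r);
          vert = (\<psi> = 0 \<or> inner r (v - x) \<ge> inner r (- (\<psi> /\<^sub>R norm \<psi>)));
          u = (if vert then v - x else - (\<psi> /\<^sub>R norm \<psi>))
      in if u = 0 then (\<psi>, \<Lambda>)
         else (let lam = inner r u / (norm u)\<^sup>2;
                   \<phi> = \<psi> + lam *\<^sub>R u
               in if align (- m) \<phi> - align (- m) \<psi> \<ge> \<delta>
                  then boost_loop lmo \<delta> m x n \<phi>
                         (if vert then \<Lambda> + lam else \<Lambda> * (1 - lam / norm \<psi>))
                  else (\<psi>, \<Lambda>)))"

definition boost_dir :: "('v::real_inner \<Rightarrow> 'v) \<Rightarrow> nat \<Rightarrow> real \<Rightarrow> 'v \<Rightarrow> 'v \<Rightarrow> 'v" where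
  "boost_dir lmo K \<delta> m x =
     (case boost_loop lmo \<delta> m x K 0 0 of (\<psi>, \<Lambda>) \<Rightarrow> if \<Lambda> \<noteq> 0 then \<psi> /\<^sub>R \<Lambda> else 0)"

definition bfw_step :: "('v::real_inner \<Rightarrow> 'v) \<Rightarrow> nat \<Rightarrow> real \<Rightarrow> real \<Rightarrow> 'v \<Rightarrow> 'v \<Rightarrow> 'v" where
  "bfw_step lmo K \<delta> eta m x =
     (let s = lmo m;
          d = boost_dir lmo K \<delta> m x;
          \<gamma> = (if d \<noteq> 0 then min (eta * norm (s - x) / norm d) 1 else 1)
      in if \<gamma> < 1 then x + \<gamma> *\<^sub>R d else x + eta *\<^sub>R (s - x))"

text \<open>Boosted stochastic Frank-Wolfe with the Heavy Ball estimator.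
  bsfw lmo K delta eta rho minit g t = (x^t, m^t), where g t y is the stochastic
  gradient at y computed with the sample drawn at iteration t.\<close>
fun bsfw :: "('v::real_inner \<Rightarrow> 'v) \<Rightarrow> nat \<Rightarrow> real \<Rightarrow> (nat \<Rightarrow> real) \<Rightarrow> (nat \<Rightarrow> real) \<Rightarrow> 'v
               \<Rightarrow> (nat \<Rightarrow> 'v \<Rightarrow> 'v) \<Rightarrow> nat \<Rightarrow> 'v \<times> 'v" where
  "bsfw lmo K \<delta> eta rho minit g 0 = (lmo minit, 0)"
| "bsfw lmo K \<delta> eta rho minit g (Suc t) =
     (case bsfw lmo K \<delta> eta rho minit g t of (x, m) \<Rightarrow>
        let x' = bfw_step lmo K \<delta> (eta t) m x
        in (x', (1 - rho (Suc t)) *\<^sub>R m + rho (Suc t) *\<^sub>R g (Suc t) x'))"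

end

theory Submission
  imports Defs
begin

lemma align_meas[measurable]:
  fixes d dh :: "'a \<Rightarrow> 'v::euclidean_space"
  assumes [measurable]: "d \<in> borel_measurable N" "dh \<in> borel_measurable N"
  shows "(\<lambda>\<omega>. align (d \<omega>) (dh \<omega>)) \<in> borel_measurable N"
  unfolding align_def by measurable

lemma boost_loop_meas:
  fixes lmo :: "'v::euclidean_space \<Rightarrow> 'v"
  assumes lm[measurable]: "lmo \<in> borel_measurable borel"
  shows "\<And>m x psi La. m \<in> borel_measurable N \<Longrightarrow> x \<in> borel_measurable N \<Longrightarrow>
     psi \<in> borel_measurable N \<Longrightarrow> La \<in> borel_measurable N \<Longrightarrow>
     (\<lambda>\<omega>. boost_loop lmo \<delta> (m \<omega>) (x \<omega>) n (psi \<omega>) (La \<omega>)) \<in> measurable N (borel \<Otimes>\<^sub>M borel)"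
proof (induction n)
  case 0
  then show ?case by simp
next
  case (Suc n)
  note [measurable] = Suc.prems
  note IH[measurable] = Suc.IH
  show ?case
    unfolding boost_loop.simps Let_def
    by measurable
qed

lemma bfw_step_meas[measurable]:
  fixes lmo :: "'v::euclidean_space \<Rightarrow> 'v"
  assumes lm[measurable]: "lmo \<in> borel_measurable borel"
  and [measurable]: "m \<in> borel_measurable N" "x \<in> borel_measurable N"
  shows "(\<lambda>\<omega>. bfw_step lmo K \<delta> eta (m \<omega>) (x \<omega>)) \<in> borel_measurable N"
proof -
  have [measurable]: "(\<lambda>\<omega>. boost_dir lmo K \<delta> (m \<omega>) (x \<omega>)) \<in> borel_measurable N"
  proof -
    have [measurable]: "(\<lambda>\<omega>. boost_loop lmo \<delta> (m \<omega>) (x \<omega>) K 0 0) \<in> measurable N (borel \<Otimes>\<^sub>M borel)"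
      by (rule boost_loop_meas) auto
    show ?thesis unfolding boost_dir_def case_prod_beta by measurable
  qed
  show ?thesis unfolding bfw_step_def Let_def by measurable
qed

lemma bsfw_meas:
  fixes lmo :: "'v::euclidean_space \<Rightarrow> 'v" and G :: "'v \<Rightarrow> 's \<Rightarrow> 'v"
  assumes lm[measurable]: "lmo \<in> borel_measurable borel"
  and G_meas[measurable]: "(\<lambda>(x, z). G x z) \<in> borel_measurable (borel \<Otimes>\<^sub>M S)"
  and I: "{..t} \<subseteq> I"
  shows "(\<lambda>h. bsfw lmo K \<delta> eta rho minit (\<lambda>t y. G y (h t)) t) \<in> measurable (PiM I (\<lambda>_. S)) (borel \<Otimes>\<^sub>M borel)"
  using I
proof (induction t)
  case 0
  then show ?case by simp
next
  case (Suc t)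
  then have IH[measurable]: "(\<lambda>h. bsfw lmo K \<delta> eta rho minit (\<lambda>t y. G y (h t)) t) \<in> measurable (PiM I (\<lambda>_. S)) (borel \<Otimes>\<^sub>M borel)"
    using Suc.IH Suc.prems by force
  have St: "Suc t \<in> I" using Suc by auto
  have [measurable]: "(\<lambda>h. h (Suc t)) \<in> measurable (PiM I (\<lambda>_. S)) S"
    using St by measurable
  have G2: "\<And>(a::_\<Rightarrow>'v) b. a \<in> borel_measurable (PiM I (\<lambda>_. S)) \<Longrightarrow> b \<in> measurable (PiM I (\<lambda>_. S)) S \<Longrightarrow>
      (\<lambda>h. G (a h) (b h)) \<in> borel_measurable (PiM I (\<lambda>_. S))"
  proof -
    fix a :: "_ \<Rightarrow> 'v" and b assume [measurable]: "a \<in> borel_measurable (PiM I (\<lambda>_. S))" "b \<in> measurable (PiM I (\<lambda>_. S)) S"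
    have "(\<lambda>h. (\<lambda>(x, z). G x z) (a h, b h)) \<in> borel_measurable (PiM I (\<lambda>_. S))" by measurable
    then show "(\<lambda>h. G (a h) (b h)) \<in> borel_measurable (PiM I (\<lambda>_. S))" by simp
  qed
  note G2[measurable]
  show ?case
    unfolding bsfw.simps case_prod_beta Let_def by measurable
qed

lemma align_ge: "align d dh \<ge> -1"
proof (cases "dh = 0")
  case False
  have "- (norm d * norm dh) \<le> inner d dh"
    using Cauchy_Schwarz_ineq2[of d dh] by linarith
  moreover have "norm d * norm dh \<ge> 0" by simp
  ultimately show ?thesis using False unfolding align_def
    by (cases "d = 0") (auto simp: field_simps)
qed (simp add: align_def)

lemma align_zero[simp]: "align d 0 = -1" by (simp add: align_def)

lemma align_pos_scale: "c > 0 \<Longrightarrow> align d (c *\<^sub>R dh) = align d dh"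
  by (cases "dh = 0") (auto simp: align_def)

lemma align_neg_scale: "c < 0 \<Longrightarrow> dh \<noteq> 0 \<Longrightarrow> align d (c *\<^sub>R dh) = - align d dh"
  by (cases "dh = 0") (auto simp: align_def abs_if divide_simps)

context
  fixes C :: "'v::euclidean_space set" and lmo :: "'v \<Rightarrow> 'v" and m x :: 'v and \<delta> :: real
  assumes cvx: "convex C" and xC: "x \<in> C"
    and lmo: "\<And>v. lmo v \<in> C \<and> (\<forall>s\<in>C. inner (lmo v) v \<le> inner s v)"
    and dpos: "\<delta> > 0"
begin

definition Inv :: "'v \<Rightarrow> real \<Rightarrow> bool" where
  "Inv \<psi> \<Lambda> \<longleftrightarrow> (\<psi> = 0 \<and> \<Lambda> = 0) \<or>
     (lmo m \<noteq> x \<and> \<Lambda> > 0 \<and> \<psi> \<noteq> 0 \<and> x + (1/\<Lambda>) *\<^sub>R \<psi> \<in> C \<and> align (-m) \<psi> \<ge> align (-m) (lmo m - x))"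

lemma align_sx_nonneg:
  assumes "lmo m \<noteq> x" shows "align (-m) (lmo m - x) \<ge> 0"
proof -
  have "inner (lmo m) m \<le> inner x m" using lmo xC by blast
  then have "inner (-m) (lmo m - x) \<ge> 0" by (simp add: inner_diff_right inner_commute)
  then show ?thesis using assms unfolding align_def by (simp add: divide_nonpos_nonneg)
qed

lemma Inv_step:
  assumes "Inv \<psi> \<Lambda>"
  shows "Inv (fst (boost_loop lmo \<delta> m x n \<psi> \<Lambda>)) (snd (boost_loop lmo \<delta> m x n \<psi> \<Lambda>))"
  using assms
proof (induction n arbitrary: \<psi> \<Lambda>)
  case 0
  then show ?case by simp
next
  case (Suc n)
  define r where "r = - m - \<psi>"
  define v where "v = lmo (- r)"
  define vert where "vert = (\<psi> = 0 \<or> inner r (v - x) \<ge> inner r (- (\<psi> /\<^sub>R norm \<psi>)))"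
  define u where "u = (if vert then v - x else - (\<psi> /\<^sub>R norm \<psi>))"
  define lam where "lam = inner r u / (norm u)\<^sup>2"
  define \<phi> where "\<phi> = \<psi> + lam *\<^sub>R u"
  define \<Lambda>' where "\<Lambda>' = (if vert then \<Lambda> + lam else \<Lambda> * (1 - lam / norm \<psi>))"
  have eq: "boost_loop lmo \<delta> m x (Suc n) \<psi> \<Lambda> =
     (if u = 0 then (\<psi>, \<Lambda>) else if align (- m) \<phi> - align (- m) \<psi> \<ge> \<delta>
        then boost_loop lmo \<delta> m x n \<phi> \<Lambda>' else (\<psi>, \<Lambda>))"
    unfolding boost_loop.simps Let_def r_def[symmetric] v_def[symmetric] vert_def[symmetric]
      u_def[symmetric] lam_def[symmetric] \<phi>_def[symmetric] \<Lambda>'_def[symmetric] by simp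
  have vC: "v \<in> C" using lmo by (simp add: v_def)
  have rv: "inner r (v - x) \<ge> 0"
  proof -
    have "inner (lmo (-r)) (-r) \<le> inner x (-r)" using lmo xC by blast
    then have "inner v (-r) \<le> inner x (-r)" by (simp add: v_def)
    then show ?thesis by (simp add: inner_diff_right inner_commute)
  qed
  show ?case
  proof (cases "u = 0 \<or> \<not> (align (- m) \<phi> - align (- m) \<psi> \<ge> \<delta>)")
    case True
    then show ?thesis using eq Suc.prems by auto
  next
    case False
    then have u0: "u \<noteq> 0" and acc: "align (- m) \<phi> - align (- m) \<psi> \<ge> \<delta>" by auto
    have eq2: "boost_loop lmo \<delta> m x (Suc n) \<psi> \<Lambda> = boost_loop lmo \<delta> m x n \<phi> \<Lambda>'"
      using eq False by auto
    have phi0: "\<phi> \<noteq> 0"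
    proof
      assume "\<phi> = 0"
      then have "-1 - align (-m) \<psi> \<ge> \<delta>" using acc by simp
      then show False using align_ge[of "-m" \<psi>] dpos by linarith
    qed
    have "Inv \<phi> \<Lambda>'"
    proof (cases "\<psi> = 0")
      case True
      then have L0: "\<Lambda> = 0" using Suc.prems unfolding Inv_def by auto
      have vs: "v = lmo m" using True by (simp add: v_def r_def)
      have vt: vert using True by (simp add: vert_def)
      have uu: "u = lmo m - x" using vt vs by (simp add: u_def)
      have lam0: "lam \<ge> 0" using rv vt by (simp add: lam_def u_def)
      have lampos: "lam > 0"
      proof (rule ccontr)
        assume "\<not> lam > 0" then have "lam = 0" using lam0 by simp
        then have "\<phi> = 0" using True by (simp add: \<phi>_def)
        then show False using phi0 by simp
      qed
      have "\<phi> = lam *\<^sub>R (lmo m - x)" using True uu by (simp add: \<phi>_def)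
      moreover have "\<Lambda>' = lam" using vt L0 by (simp add: \<Lambda>'_def)
      ultimately show ?thesis unfolding Inv_def using lampos uu u0 lmo phi0
        by (auto simp: align_pos_scale)
    next
      case False
      then have I: "lmo m \<noteq> x" "\<Lambda> > 0" "x + (1/\<Lambda>) *\<^sub>R \<psi> \<in> C" "align (-m) \<psi> \<ge> align (-m) (lmo m - x)"
        using Suc.prems unfolding Inv_def by auto
      show ?thesis
      proof (cases vert)
        case True
        have uu: "u = v - x" using True by (simp add: u_def)
        have lam0: "lam \<ge> 0" using rv uu by (simp add: lam_def)
        have L': "\<Lambda>' = \<Lambda> + lam" using True by (simp add: \<Lambda>'_def)
        have Lp: "\<Lambda>' > 0" using L' lam0 I by simp
        have "x + (1/\<Lambda>') *\<^sub>R \<phi> = (\<Lambda>/\<Lambda>') *\<^sub>R (x + (1/\<Lambda>) *\<^sub>R \<psi>) + (lam/\<Lambda>') *\<^sub>R v"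
        proof -
          have ab: "\<Lambda>/\<Lambda>' + lam/\<Lambda>' = 1" using Lp L' by (simp add: add_divide_distrib[symmetric])
          have xx: "x = (\<Lambda>/\<Lambda>') *\<^sub>R x + (lam/\<Lambda>') *\<^sub>R x"
            by (simp add: scaleR_add_left[symmetric] ab)
          have p1: "(\<Lambda>/\<Lambda>') *\<^sub>R ((1/\<Lambda>) *\<^sub>R \<psi>) = (1/\<Lambda>') *\<^sub>R \<psi>"
          proof -
            have Lne: "\<Lambda> \<noteq> 0" using I(2) by simp
            have "(\<Lambda>/\<Lambda>') *\<^sub>R ((1/\<Lambda>) *\<^sub>R \<psi>) = ((\<Lambda>/\<Lambda>') * (1/\<Lambda>)) *\<^sub>R \<psi>" by simp
            also have "(\<Lambda>/\<Lambda>') * (1/\<Lambda>) = 1/\<Lambda>'" using Lne by simp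
            finally show ?thesis .
          qed
          have p2: "(1/\<Lambda>') *\<^sub>R (lam *\<^sub>R (v - x)) = (lam/\<Lambda>') *\<^sub>R v - (lam/\<Lambda>') *\<^sub>R x"
            by (simp add: scaleR_diff_right)
          have "x + (1/\<Lambda>') *\<^sub>R \<phi> = x + (1/\<Lambda>') *\<^sub>R \<psi> + (1/\<Lambda>') *\<^sub>R (lam *\<^sub>R (v - x))"
            unfolding \<phi>_def uu by (simp add: scaleR_add_right)
          also have "\<dots> = (\<Lambda>/\<Lambda>') *\<^sub>R x + (1/\<Lambda>') *\<^sub>R \<psi> + (lam/\<Lambda>') *\<^sub>R v"
            using p2 xx by (metis (no_types, lifting) add.commute add_diff_cancel_left' diff_add_cancel group_cancel.add1)
          also have "\<dots> = (\<Lambda>/\<Lambda>') *\<^sub>R (x + (1/\<Lambda>) *\<^sub>R \<psi>) + (lam/\<Lambda>') *\<^sub>R v"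
            by (simp only: p1 scaleR_add_right)
          finally show ?thesis .
        qed
        moreover have "(\<Lambda>/\<Lambda>') *\<^sub>R (x + (1/\<Lambda>) *\<^sub>R \<psi>) + (lam/\<Lambda>') *\<^sub>R v \<in> C"
          using convexD[OF cvx I(3) vC, of "\<Lambda>/\<Lambda>'" "lam/\<Lambda>'"] I Lp lam0 L'
          by (simp add: add_divide_distrib[symmetric])
        ultimately have "x + (1/\<Lambda>') *\<^sub>R \<phi> \<in> C" by simp
        moreover have "align (-m) \<phi> \<ge> align (-m) (lmo m - x)" using acc I dpos by linarith
        ultimately show ?thesis unfolding Inv_def using I Lp phi0 by auto
      next
        case nv: False
        have uu: "u = - (\<psi> /\<^sub>R norm \<psi>)" using nv by (simp add: u_def)
        have nu: "norm u = 1" using False uu by simp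
        have "\<phi> = (1 - lam / norm \<psi>) *\<^sub>R \<psi>"
          unfolding \<phi>_def uu by (simp add: scaleR_diff_left divide_inverse)
        moreover have "align (-m) \<psi> \<ge> 0" using I align_sx_nonneg by (meson order_trans)
        ultimately have False using acc dpos phi0
          by (cases "1 - lam / norm \<psi>" "0::real" rule: linorder_cases)
             (auto simp: align_pos_scale align_neg_scale)
        then show ?thesis ..
      qed
    qed
    then show ?thesis using eq2 Suc.IH by simp
  qed
qed

lemma dir_props:
  fixes K :: nat
  defines "d \<equiv> boost_dir lmo K \<delta> m x"
  shows "d = 0 \<or> (lmo m \<noteq> x \<and> d \<noteq> 0 \<and> x + d \<in> C \<and> align (-m) d \<ge> align (-m) (lmo m - x))"
proof -
  define p where "p = boost_loop lmo \<delta> m x K 0 0"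
  have I: "Inv (fst p) (snd p)" unfolding p_def by (rule Inv_step) (simp add: Inv_def)
  have d: "d = (if snd p \<noteq> 0 then (fst p) /\<^sub>R (snd p) else 0)"
    unfolding d_def boost_dir_def p_def[symmetric] by (cases p) simp
  show ?thesis
  proof (cases "snd p = 0")
    case True then show ?thesis using d by simp
  next
    case False
    then have I2: "lmo m \<noteq> x" "snd p > 0" "fst p \<noteq> 0" "x + (1/snd p) *\<^sub>R fst p \<in> C"
      "align (-m) (fst p) \<ge> align (-m) (lmo m - x)" using I unfolding Inv_def by auto
    have dd: "d = (1/snd p) *\<^sub>R fst p" using d False by (simp add: divide_inverse)
    have "align (-m) d = align (-m) (fst p)" unfolding dd using I2 by (simp add: align_pos_scale)
    then show ?thesis using I2 dd by auto
  qed
qed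

lemma step_props:
  fixes K :: nat
  assumes eta: "0 \<le> eta" "eta \<le> 1"
  defines "x' \<equiv> bfw_step lmo K \<delta> eta m x" and "s \<equiv> lmo m"
  shows "x' \<in> C" "norm (x' - x) \<le> eta * norm (s - x)" "inner m (x' - x) \<le> eta * inner m (s - x)"
proof -
  define d where "d = boost_dir lmo K \<delta> m x"
  define \<gamma> where "\<gamma> = (if d \<noteq> 0 then min (eta * norm (s - x) / norm d) 1 else 1)"
  have x'eq: "x' = (if \<gamma> < 1 then x + \<gamma> *\<^sub>R d else x + eta *\<^sub>R (s - x))"
    unfolding x'_def bfw_step_def Let_def s_def[symmetric] d_def[symmetric] \<gamma>_def[symmetric] by simp
  have sC: "s \<in> C" using lmo s_def by simp
  have fw: "x + eta *\<^sub>R (s - x) \<in> C \<and> norm ((x + eta *\<^sub>R (s - x)) - x) \<le> eta * norm (s - x)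
       \<and> inner m ((x + eta *\<^sub>R (s - x)) - x) \<le> eta * inner m (s - x)"
  proof -
    have "x + eta *\<^sub>R (s - x) = (1 - eta) *\<^sub>R x + eta *\<^sub>R s" by (simp add: algebra_simps)
    also have "\<dots> \<in> C" using convexD[OF cvx xC sC, of "1 - eta" eta] eta by simp
    finally show ?thesis using eta by simp
  qed
  have all: "x' \<in> C \<and> norm (x' - x) \<le> eta * norm (s - x) \<and> inner m (x' - x) \<le> eta * inner m (s - x)"
  proof (cases "\<gamma> < 1")
    case False then show ?thesis using x'eq fw by simp
  next
    case True
    then have d0: "d \<noteq> 0" using \<gamma>_def by (auto split: if_splits)
    then have D: "lmo m \<noteq> x" "x + d \<in> C" "align (-m) d \<ge> align (-m) (lmo m - x)"
      using dir_props[of K] d_def by auto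
    have g: "\<gamma> = eta * norm (s - x) / norm d" using True d0 \<gamma>_def by (auto simp: min_def split: if_splits)
    have g0: "\<gamma> \<ge> 0" using g eta by simp
    have x'e: "x' = x + \<gamma> *\<^sub>R d" using x'eq True by simp
    have "x' = (1 - \<gamma>) *\<^sub>R x + \<gamma> *\<^sub>R (x + d)" unfolding x'e by (simp add: algebra_simps)
    also have "\<dots> \<in> C" using convexD[OF cvx xC D(2), of "1 - \<gamma>" \<gamma>] g0 True by simp
    finally have c1: "x' \<in> C" .
    have c2: "norm (x' - x) = eta * norm (s - x)" using x'e g g0 d0 eta by simp
    have c3: "inner m (x' - x) \<le> eta * inner m (s - x)"
    proof (cases "m = 0")
      case True then show ?thesis by simp
    next
      case m0: False
      have sx: "s - x \<noteq> 0" using D(1) s_def by simp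
      have "inner (-m) (s - x) / (norm m * norm (s - x)) \<le> inner (-m) d / (norm m * norm d)"
        using D(3) d0 sx s_def unfolding align_def by simp
      then have "norm m * (inner (-m) (s - x) / (norm m * norm (s - x))) \<le> norm m * (inner (-m) d / (norm m * norm d))"
        by (intro mult_left_mono) auto
      moreover have "norm m * (inner (-m) (s - x) / (norm m * norm (s - x))) = inner (-m) (s - x) / norm (s - x)"
        using m0 by simp
      moreover have "norm m * (inner (-m) d / (norm m * norm d)) = inner (-m) d / norm d"
        using m0 by simp
      ultimately have "inner (-m) (s - x) / norm (s - x) \<le> inner (-m) d / norm d" by simp
      then have "eta * norm (s - x) * (inner (-m) (s - x) / norm (s - x)) \<le> eta * norm (s - x) * (inner (-m) d / norm d)"
        using eta by (intro mult_left_mono) auto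
      then have "eta * inner (-m) (s - x) \<le> \<gamma> * inner (-m) d" using sx g by simp
      then show ?thesis using x'e by (simp add: inner_diff_right algebra_simps)
    qed
    show ?thesis using c1 c2 c3 by simp
  qed
  then show "x' \<in> C" "norm (x' - x) \<le> eta * norm (s - x)" "inner m (x' - x) \<le> eta * inner m (s - x)"
    by auto
qed

end

lemma descent:
  fixes f :: "'v::euclidean_space \<Rightarrow> real" and grad :: "'v \<Rightarrow> 'v"
  assumes cvx: "convex C"
    and deriv: "\<And>x. (f has_derivative (\<lambda>h. inner (grad x) h)) (at x)"
    and lip: "\<forall>x\<in>C. \<forall>y\<in>C. norm (grad x - grad y) \<le> L * norm (x - y)"
    and xC: "x \<in> C" and yC: "y \<in> C"
  shows "f y \<le> f x + inner (grad x) (y - x) + L / 2 * (norm (y - x))\<^sup>2"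
proof -
  define h where "h = y - x"
  define \<phi> where "\<phi> = (\<lambda>\<tau>::real. f (x + \<tau> *\<^sub>R h) - \<tau> * inner (grad x) h - L / 2 * \<tau>\<^sup>2 * (norm h)\<^sup>2)"
  have "\<phi> 1 \<le> \<phi> 0"
  proof (rule DERIV_nonpos_imp_nonincreasing[of 0 1])
    fix \<tau> :: real assume t: "0 \<le> \<tau>" "\<tau> \<le> 1"
    have zC: "x + \<tau> *\<^sub>R h \<in> C"
    proof -
      have "x + \<tau> *\<^sub>R h = (1 - \<tau>) *\<^sub>R x + \<tau> *\<^sub>R y" by (simp add: h_def algebra_simps)
      then show ?thesis using convexD[OF cvx xC yC, of "1 - \<tau>" \<tau>] t by simp
    qed
    have d1: "((\<lambda>\<tau>. x + \<tau> *\<^sub>R h) has_derivative (\<lambda>t. t *\<^sub>R h)) (at \<tau>)"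
      by (auto intro!: derivative_eq_intros)
    have d2: "((\<lambda>\<tau>. f (x + \<tau> *\<^sub>R h)) has_derivative (\<lambda>t. inner (grad (x + \<tau> *\<^sub>R h)) (t *\<^sub>R h))) (at \<tau>)"
      using has_derivative_compose[OF d1 deriv] .
    have d3: "((\<lambda>\<tau>. f (x + \<tau> *\<^sub>R h)) has_field_derivative inner (grad (x + \<tau> *\<^sub>R h)) h) (at \<tau>)"
      by (rule has_derivative_imp_has_field_derivative[OF d2]) simp
    have "(\<phi> has_field_derivative (inner (grad (x + \<tau> *\<^sub>R h)) h - inner (grad x) h - L * \<tau> * (norm h)\<^sup>2)) (at \<tau>)"
      unfolding \<phi>_def by (rule derivative_eq_intros d3 | simp)+
    moreover have "inner (grad (x + \<tau> *\<^sub>R h)) h - inner (grad x) h - L * \<tau> * (norm h)\<^sup>2 \<le> 0"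
    proof -
      have "inner (grad (x + \<tau> *\<^sub>R h)) h - inner (grad x) h = inner (grad (x + \<tau> *\<^sub>R h) - grad x) h"
        by (simp add: inner_diff_left)
      also have "\<dots> \<le> norm (grad (x + \<tau> *\<^sub>R h) - grad x) * norm h" by (rule norm_cauchy_schwarz)
      also have "\<dots> \<le> (L * norm (\<tau> *\<^sub>R h)) * norm h"
      proof (intro mult_right_mono)
        show "norm (grad (x + \<tau> *\<^sub>R h) - grad x) \<le> L * norm (\<tau> *\<^sub>R h)"
          using lip zC xC by (metis add_diff_cancel_left')
      qed simp
      also have "\<dots> = L * \<tau> * (norm h)\<^sup>2" using t by (simp add: power2_eq_square)
      finally show ?thesis by simp
    qed
    ultimately show "\<exists>y. (\<phi> has_real_derivative y) (at \<tau>) \<and> y \<le> 0" by blast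
  qed simp
  then show ?thesis unfolding \<phi>_def h_def by simp
qed

context
  fixes C :: "'v::euclidean_space set" and lmo :: "'v \<Rightarrow> 'v" and grad :: "'v \<Rightarrow> 'v"
  assumes lmo: "\<And>v. lmo v \<in> C \<and> (\<forall>s\<in>C. inner (lmo v) v \<le> inner s v)"
begin

lemma gap_eq: "fw_gap C grad x = inner (grad x) (x - lmo (grad x))"
  unfolding fw_gap_def
proof (rule cSup_eq_maximum)
  show "inner (grad x) (x - lmo (grad x)) \<in> (\<lambda>s. inner (grad x) (x - s)) ` C" using lmo by blast
  fix y assume "y \<in> (\<lambda>s. inner (grad x) (x - s)) ` C"
  then obtain s where "s \<in> C" "y = inner (grad x) (x - s)" by auto
  then show "y \<le> inner (grad x) (x - lmo (grad x))"
    using lmo[of "grad x"] by (auto simp: inner_diff_right inner_commute)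
qed

lemma gap_nonneg: "x \<in> C \<Longrightarrow> fw_gap C grad x \<ge> 0"
  unfolding gap_eq using lmo[of "grad x"] by (auto simp: inner_diff_right inner_commute)

lemma gap_bound:
  assumes xC: "x \<in> C" and bC: "bounded C"
  shows "fw_gap C grad x \<le> inner m (x - lmo m) + norm (grad x - m) * diameter C"
proof -
  define s' where "s' = lmo (grad x)"
  have s'C: "s' \<in> C" using lmo s'_def by simp
  have "inner m (x - s') \<le> inner m (x - lmo m)"
    using lmo[of m] s'C by (auto simp: inner_diff_right inner_commute)
  moreover have "inner (grad x - m) (x - s') \<le> norm (grad x - m) * diameter C"
  proof -
    have "inner (grad x - m) (x - s') \<le> norm (grad x - m) * norm (x - s')" by (rule norm_cauchy_schwarz)
    also have "\<dots> \<le> norm (grad x - m) * diameter C"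
      using diameter_bounded_bound[OF bC xC s'C] by (intro mult_left_mono) (auto simp: dist_norm)
    finally show ?thesis .
  qed
  ultimately show ?thesis unfolding gap_eq s'_def[symmetric]
    by (simp add: inner_diff_left)
qed

end

context
  fixes C :: "'v::euclidean_space set" and lmo :: "'v \<Rightarrow> 'v" and grad :: "'v \<Rightarrow> 'v"
    and f :: "'v \<Rightarrow> real" and L \<delta> :: real and K :: nat
  assumes C: "compact C" "convex C"
    and deriv: "\<And>x. (f has_derivative (\<lambda>h. inner (grad x) h)) (at x)"
    and lip: "\<forall>x\<in>C. \<forall>y\<in>C. norm (grad x - grad y) \<le> L * norm (x - y)"
    and L0: "L \<ge> 0"
    and lmo: "\<And>v. lmo v \<in> C \<and> (\<forall>s\<in>C. inner (lmo v) v \<le> inner s v)"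
    and dpos: "\<delta> > 0"
begin

lemma one_step:
  fixes m :: 'v
  assumes xC: "x \<in> C" and eta: "0 \<le> eta" "eta \<le> 1"
  defines "x' \<equiv> bfw_step lmo K \<delta> eta m x"
  shows "x' \<in> C" "norm (x' - x) \<le> eta * diameter C"
    "eta * fw_gap C grad x \<le> f x - f x' + 2 * eta * diameter C * norm (m - grad x) + L / 2 * eta\<^sup>2 * (diameter C)\<^sup>2"
proof -
  define s where "s = lmo m"
  define D where "D = diameter C"
  have bC: "bounded C" using C compact_imp_bounded by auto
  have sC: "s \<in> C" using lmo s_def by simp
  have sx: "norm (s - x) \<le> D" using diameter_bounded_bound[OF bC sC xC] by (simp add: dist_norm D_def)
  note st = step_props[where m=m and K=K, OF C(2) xC lmo dpos eta, folded x'_def s_def]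
  show x'C: "x' \<in> C" by (rule st(1))
  have nx: "norm (x' - x) \<le> eta * D"
    using st(2) sx eta by (meson mult_left_mono order_trans)
  then show "norm (x' - x) \<le> eta * diameter C" by (simp add: D_def)
  have desc: "f x' \<le> f x + inner (grad x) (x' - x) + L / 2 * (norm (x' - x))\<^sup>2"
    by (rule descent[OF C(2) deriv lip xC x'C])
  have q: "L / 2 * (norm (x' - x))\<^sup>2 \<le> L / 2 * eta\<^sup>2 * D\<^sup>2"
  proof -
    have "(norm (x' - x))\<^sup>2 \<le> (eta * D)\<^sup>2" using nx by (intro power_mono) auto
    then have "L / 2 * (norm (x' - x))\<^sup>2 \<le> L / 2 * (eta * D)\<^sup>2" using L0 by (intro mult_left_mono) auto
    then show ?thesis by (simp add: power_mult_distrib)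
  qed
  have i1: "inner (grad x) (x' - x) = inner m (x' - x) + inner (grad x - m) (x' - x)"
    by (simp add: inner_diff_left)
  have i2: "inner (grad x - m) (x' - x) \<le> norm (m - grad x) * (eta * D)"
  proof -
    have "inner (grad x - m) (x' - x) \<le> norm (grad x - m) * norm (x' - x)" by (rule norm_cauchy_schwarz)
    also have "\<dots> \<le> norm (grad x - m) * (eta * D)" using nx by (intro mult_left_mono) auto
    finally show ?thesis by (simp add: norm_minus_commute)
  qed
  have g: "fw_gap C grad x \<le> inner m (x - s) + norm (m - grad x) * D"
    using gap_bound[where m=m and grad=grad, OF lmo xC bC] by (simp add: s_def D_def norm_minus_commute)
  have g2: "eta * inner m (s - x) \<le> - eta * fw_gap C grad x + eta * norm (m - grad x) * D"
  proof -
    have "eta * fw_gap C grad x \<le> eta * (inner m (x - s) + norm (m - grad x) * D)"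
      using g eta by (intro mult_left_mono) auto
    moreover have "inner m (x - s) = - inner m (s - x)" by (simp add: inner_diff_right)
    ultimately show ?thesis by (simp add: algebra_simps)
  qed
  show "eta * fw_gap C grad x \<le> f x - f x' + 2 * eta * diameter C * norm (m - grad x) + L / 2 * eta\<^sup>2 * (diameter C)\<^sup>2"
    using desc q i1 i2 g2 st(3) unfolding D_def[symmetric] by (simp add: algebra_simps)
qed

lemma path_bound:
  fixes X Mm :: "nat \<Rightarrow> 'v" and eta :: "nat \<Rightarrow> real"
  assumes X0: "X 0 \<in> C" and XS: "\<And>t. X (Suc t) = bfw_step lmo K \<delta> (eta t) (Mm t) (X t)"
    and eta: "\<And>t. 0 \<le> eta t" "\<And>t. eta t \<le> 1"
  shows "\<And>t. X t \<in> C"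
    and "(\<Sum>t<T. eta t * fw_gap C grad (X t)) \<le> f (X 0) - f (X T)
          + (\<Sum>t<T. 2 * eta t * diameter C * norm (Mm t - grad (X t)) + L / 2 * (eta t)\<^sup>2 * (diameter C)\<^sup>2)"
proof -
  show XC: "X t \<in> C" for t
  proof (induction t)
    case 0 then show ?case using X0 .
  next
    case (Suc t) then show ?case unfolding XS using one_step(1)[OF Suc eta(1) eta(2)] by simp
  qed
  have "(\<Sum>t<T. eta t * fw_gap C grad (X t)) \<le>
     (\<Sum>t<T. (f (X t) - f (X (Suc t))) + (2 * eta t * diameter C * norm (Mm t - grad (X t)) + L / 2 * (eta t)\<^sup>2 * (diameter C)\<^sup>2))"
  proof (intro sum_mono)
    fix t assume "t \<in> {..<T}"
    have "eta t * fw_gap C grad (X t) \<le> f (X t) - f (X (Suc t)) + 2 * eta t * diameter C * norm (Mm t - grad (X t)) + L / 2 * (eta t)\<^sup>2 * (diameter C)\<^sup>2"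
      using one_step(3)[OF XC eta(1) eta(2), of t t "Mm t"] unfolding XS[symmetric] .
    then show "eta t * fw_gap C grad (X t) \<le> (f (X t) - f (X (Suc t))) + (2 * eta t * diameter C * norm (Mm t - grad (X t)) + L / 2 * (eta t)\<^sup>2 * (diameter C)\<^sup>2)"
      by simp
  qed
  also have "\<dots> = (\<Sum>t<T. f (X t) - f (X (Suc t))) + (\<Sum>t<T. 2 * eta t * diameter C * norm (Mm t - grad (X t)) + L / 2 * (eta t)\<^sup>2 * (diameter C)\<^sup>2)"
    by (rule sum.distrib)
  also have "(\<Sum>t<T. f (X t) - f (X (Suc t))) = f (X 0) - f (X T)"
    using sum_lessThan_telescope'[of "\<lambda>t. f (X t)" T] by simp
  finally show "(\<Sum>t<T. eta t * fw_gap C grad (X t)) \<le> f (X 0) - f (X T)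
          + (\<Sum>t<T. 2 * eta t * diameter C * norm (Mm t - grad (X t)) + L / 2 * (eta t)\<^sup>2 * (diameter C)\<^sup>2)" .
qed

end

definition q4 :: "real \<Rightarrow> real" where "q4 x = x powr (1/4)"

lemma q4_pos: "x > 0 \<Longrightarrow> q4 x > 0" by (simp add: q4_def)

lemma q4_pow4: "x > 0 \<Longrightarrow> (q4 x)^4 = x"
  unfolding q4_def by (subst powr_power) auto

lemma q4_pow3: "x > 0 \<Longrightarrow> (q4 x)^3 = x powr (3/4)"
  unfolding q4_def by (subst powr_power) auto

lemma q4_mono: "0 < x \<Longrightarrow> x \<le> y \<Longrightarrow> q4 x \<le> q4 y"
  unfolding q4_def by (simp add: powr_mono2)

lemma sqrt_sqrt_q4: "x > 0 \<Longrightarrow> sqrt (sqrt x) = q4 x"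
  unfolding q4_def by (simp add: powr_half_sqrt[symmetric] powr_powr)

lemma eta_sq: "x > 0 \<Longrightarrow> (1 / x powr (3/4))\<^sup>2 = 1 / (sqrt x)^3"
proof -
  assume x: "x > 0"
  have "(x powr (3/4))\<^sup>2 = x powr (3/2)" using x by (subst powr_power) auto
  also have "\<dots> = (sqrt x)^3" using x by (simp add: powr_half_sqrt[symmetric] powr_power)
  finally show ?thesis by (simp add: power_divide)
qed

lemma R1_term:
  fixes t :: real assumes t: "t \<ge> 0"
  shows "4 * (q4 (t + 3) - q4 (t + 2)) \<le> 1 / (t + 2) powr (3/4)"
proof -
  define a where "a = q4 (t + 2)"
  define c where "c = q4 (t + 3)"
  have a0: "a > 0" using t by (simp add: a_def q4_pos)
  have ca: "a \<le> c" using t unfolding a_def c_def by (intro q4_mono) auto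
  have a4: "a^4 = t + 2" using t by (simp add: a_def q4_pow4)
  have c4: "c^4 = t + 3" using t by (simp add: c_def q4_pow4)
  have a3: "a^3 = (t + 2) powr (3/4)" using t by (simp add: a_def q4_pow3)
  have f: "c^4 - a^4 = (c - a) * (c^3 + c^2*a + c*a^2 + a^3)" by (simp add: algebra_simps power2_eq_square power3_eq_cube power4_eq_xxxx)
  have "c^3 + c^2*a + c*a^2 + a^3 \<ge> 4 * a^3"
  proof -
    have "c^3 \<ge> a^3" "c^2*a \<ge> a^2*a" "c*a^2 \<ge> a*a^2" using ca a0
      by (auto intro!: power_mono mult_right_mono)
    then show ?thesis by (simp add: power2_eq_square power3_eq_cube)
  qed
  then have "(c - a) * (4 * a^3) \<le> (c - a) * (c^3 + c^2*a + c*a^2 + a^3)"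
    using ca by (intro mult_left_mono) auto
  also have "\<dots> = 1" using f a4 c4 by simp
  finally have "4 * (c - a) \<le> 1 / a^3" using a0 by (simp add: field_simps)
  then show ?thesis by (simp add: a_def[symmetric] c_def[symmetric] a3)
qed

lemma R1:
  "4 * ((real T + 2) powr (1/4) - 2 powr (1/4)) \<le> (\<Sum>t<T. 1 / (real t + 2) powr (3/4))"
proof -
  define g where "g = (\<lambda>t::nat. q4 (real t + 2))"
  have "(\<Sum>t<T. 4 * (g (Suc t) - g t)) \<le> (\<Sum>t<T. 1 / (real t + 2) powr (3/4))"
  proof (intro sum_mono)
    fix t assume "t \<in> {..<T}"
    have "real (Suc t) + 2 = real t + 3" by simp
    then show "4 * (g (Suc t) - g t) \<le> 1 / (real t + 2) powr (3/4)"
      using R1_term[of "real t"] unfolding g_def by (simp add: add.commute)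
  qed
  moreover have "(\<Sum>t<T. 4 * (g (Suc t) - g t)) = 4 * (g T - g 0)"
    by (simp only: sum_distrib_left[symmetric] sum_lessThan_telescope)
  ultimately show ?thesis by (simp add: q4_def g_def)
qed

lemma harm_bound: "T \<ge> 1 \<Longrightarrow> (\<Sum>t<T. 1 / (real t + 1)) \<le> 1 + ln (real T)"
proof (induction T rule: dec_induct)
  case base then show ?case by simp
next
  case (step n)
  have n: "real n \<ge> 1" using step by simp
  have "ln (real n / (real n + 1)) \<le> real n / (real n + 1) - 1"
    using n by (intro ln_le_minus_one) auto
  also have "\<dots> = - 1 / (real n + 1)" using n by (simp add: field_simps)
  finally have "1 / (real n + 1) \<le> ln (real n + 1) - ln (real n)"
    using n by (simp add: ln_div)
  then show ?case using step by (simp add: add_ac)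
qed

lemma R2:
  assumes "T \<ge> 1"
  shows "(\<Sum>t<T. 1 / (real t + 2) powr (3/4) * sqrt (1 / sqrt (real t + 1))) \<le> 1 + ln (real T)"
proof -
  have "(\<Sum>t<T. 1 / (real t + 2) powr (3/4) * sqrt (1 / sqrt (real t + 1))) \<le> (\<Sum>t<T. 1 / (real t + 1))"
  proof (intro sum_mono)
    fix t assume "t \<in> {..<T}"
    define a where "a = q4 (real t + 2)"
    define b where "b = q4 (real t + 1)"
    have b0: "b > 0" by (simp add: b_def q4_pos)
    have ab: "b \<le> a" unfolding a_def b_def by (intro q4_mono) auto
    have a3: "(real t + 2) powr (3/4) = a^3" by (simp add: a_def q4_pow3)
    have sb: "sqrt (1 / sqrt (real t + 1)) = 1 / b"
      by (simp add: b_def sqrt_sqrt_q4[symmetric] real_sqrt_divide)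
    have b4: "b^4 = real t + 1" by (simp add: b_def q4_pow4)
    have a0: "a > 0" using ab b0 by linarith
    have "b^3 * b \<le> a^3 * b" using ab b0 by (intro mult_right_mono power_mono) auto
    moreover have "0 < b^3 * b" using b0 by simp
    ultimately have "1 / (a^3 * b) \<le> 1 / (b^3 * b)"
      by (intro divide_left_mono) (auto intro!: mult_pos_pos)
    then have "1 / (a^3 * b) \<le> 1 / b^4" by (simp add: power4_eq_xxxx power3_eq_cube mult_ac)
    then show "1 / (real t + 2) powr (3/4) * sqrt (1 / sqrt (real t + 1)) \<le> 1 / (real t + 1)"
      by (simp add: a3 sb b4)
  qed
  also have "\<dots> \<le> 1 + ln (real T)" by (rule harm_bound[OF assms])
  finally show ?thesis .
qed

lemma R3: "(\<Sum>t<T. (1 / (real t + 2) powr (3/4))\<^sup>2) \<le> 2"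
proof -
  define e where "e = (\<lambda>t::nat. 1 / sqrt (real t + 1))"
  have "(\<Sum>t<T. (1 / (real t + 2) powr (3/4))\<^sup>2) \<le> (\<Sum>t<T. 2 * (e t - e (Suc t)))"
  proof (intro sum_mono)
    fix t assume "t \<in> {..<T}"
    define c where "c = sqrt (real t + 1)"
    define d where "d = sqrt (real t + 2)"
    have c0: "c > 0" by (simp add: c_def)
    have cd: "c \<le> d" by (simp add: c_def d_def)
    have c2: "c^2 = real t + 1" by (simp add: c_def)
    have d2: "d^2 = real t + 2" by (simp add: d_def)
    have "(d - c) * (d + c) = 1" using c2 d2 by (simp add: algebra_simps power2_eq_square)
    moreover have "(d - c) * (d + c) \<le> (d - c) * (2 * d)"
      using cd by (intro mult_left_mono) auto
    ultimately have h1: "(d - c) * (2 * d) \<ge> 1" by simp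
    have d0: "d > 0" using c0 cd by linarith
    have h2: "2 * (d - c) \<ge> 1 / d" using h1 d0 by (simp add: field_simps)
    have h3: "2 * (1 / c - 1 / d) = 2 * (d - c) / (c * d)" using c0 d0 by (simp add: field_simps)
    have h4: "(1 / d) / (c * d) \<le> 2 * (d - c) / (c * d)" using h2 c0 d0 by (intro divide_right_mono) auto
    have h5: "1 / d^3 \<le> (1 / d) / (c * d)"
    proof -
      have "c * d * d \<le> d * d * d" using cd d0 by (intro mult_right_mono) auto
      then have "1 / (d * d * d) \<le> 1 / (c * d * d)" using c0 d0 by (intro divide_left_mono) auto
      then show ?thesis by (simp add: power3_eq_cube mult_ac)
    qed
    have "1 / d^3 \<le> 2 * (1 / c - 1 / d)" using h3 h4 h5 by simp
    moreover have "e t = 1 / c" "e (Suc t) = 1 / d" by (simp_all add: e_def c_def d_def add_ac)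
    moreover have "(1 / (real t + 2) powr (3/4))\<^sup>2 = 1 / d^3" by (simp add: eta_sq d_def)
    ultimately show "(1 / (real t + 2) powr (3/4))\<^sup>2 \<le> 2 * (e t - e (Suc t))" by simp
  qed
  also have "\<dots> = 2 * (e 0 - e T)"
    by (simp only: sum_distrib_left[symmetric] sum_lessThan_telescope')
  also have "\<dots> \<le> 2" by (simp add: e_def)
  finally show ?thesis .
qed

lemma R4:
  fixes t :: nat
  shows "(1 - 1 / sqrt (real (Suc t) + 1)) * (1 / sqrt (real t + 1)) + (1 / sqrt (real (Suc t) + 1))\<^sup>2 / 24
         \<le> 1 / sqrt (real (Suc t) + 1)"
proof -
  define p where "p = sqrt (real t + 1)"
  define q where "q = sqrt (real t + 2)"
  have p1: "p \<ge> 1" by (simp add: p_def)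
  have pq: "p \<le> q" by (simp add: p_def q_def)
  have q2: "q^2 = p^2 + 1" by (simp add: p_def q_def)
  have qb: "q \<ge> sqrt 2" by (simp add: q_def)
  have s2: "sqrt 2 \<ge> (24/23::real)" by (rule real_le_rsqrt) (simp add: power2_eq_square)
  have key: "q^2 - q + p/24 \<le> p * q"
  proof -
    have "p * p \<le> p * q" using pq p1 by (intro mult_left_mono) auto
    moreover have "1 - q + p / 24 \<le> 0" using pq qb s2 by linarith
    ultimately show ?thesis using q2 by (simp add: power2_eq_square)
  qed
  have eq: "real (Suc t) + 1 = real t + 2" by simp
  have q0: "q > 0" using pq p1 by linarith
  show ?thesis unfolding eq q_def[symmetric] p_def[symmetric]
  proof -
    have p0: "p > 0" using p1 by simp
    have "(1 - 1 / q) * (1 / p) + (1 / q)\<^sup>2 / 24 = (q^2 - q + p/24) / (p * q^2)"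
      using p0 q0 by (simp add: field_simps power2_eq_square)
    also have "\<dots> \<le> (p * q) / (p * q^2)" using key p0 q0 by (intro divide_right_mono) auto
    also have "\<dots> = 1 / q" using p0 q0 by (simp add: power2_eq_square)
    finally show "(1 - 1 / q) * (1 / p) + (1 / q)\<^sup>2 / 24 \<le> 1 / q" .
  qed
qed

lemma (in prob_space) indep_nn_bound:
  assumes ind: "indep_var N X S Y"
    and h[measurable]: "h \<in> borel_measurable (N \<Otimes>\<^sub>M S)"
    and bnd: "\<And>\<omega>. \<omega> \<in> space M \<Longrightarrow> (\<integral>\<^sup>+\<omega>'. h (X \<omega>, Y \<omega>') \<partial>M) \<le> B \<omega>"
  shows "(\<integral>\<^sup>+\<omega>. h (X \<omega>, Y \<omega>) \<partial>M) \<le> (\<integral>\<^sup>+\<omega>. B \<omega> \<partial>M)"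
proof -
  have rvX[measurable]: "X \<in> measurable M N" using ind by (blast dest: indep_var_rv1)
  have rvY[measurable]: "Y \<in> measurable M S" using ind by (blast dest: indep_var_rv2)
  have eq: "distr M N X \<Otimes>\<^sub>M distr M S Y = distr M (N \<Otimes>\<^sub>M S) (\<lambda>x. (X x, Y x))"
    using ind indep_var_distribution_eq by blast
  interpret PY: prob_space "distr M S Y" by (rule prob_space_distr) simp
  have "(\<integral>\<^sup>+\<omega>. h (X \<omega>, Y \<omega>) \<partial>M) = integral\<^sup>N (distr M (N \<Otimes>\<^sub>M S) (\<lambda>x. (X x, Y x))) h"
    by (subst nn_integral_distr) auto
  also have "\<dots> = integral\<^sup>N (distr M N X \<Otimes>\<^sub>M distr M S Y) h" by (simp add: eq)
  also have "\<dots> = (\<integral>\<^sup>+ x. \<integral>\<^sup>+ y. h (x, y) \<partial>distr M S Y \<partial>distr M N X)"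
    by (rule PY.nn_integral_fst[symmetric]) simp
  also have "\<dots> = (\<integral>\<^sup>+ \<omega>. (\<integral>\<^sup>+ y. h (X \<omega>, y) \<partial>distr M S Y) \<partial>M)"
    by (subst nn_integral_distr) (auto intro: PY.borel_measurable_nn_integral_fst)
  also have "\<dots> = (\<integral>\<^sup>+ \<omega>. (\<integral>\<^sup>+ \<omega>'. h (X \<omega>, Y \<omega>') \<partial>M) \<partial>M)"
    by (intro nn_integral_cong) (subst nn_integral_distr; simp)
  also have "\<dots> \<le> (\<integral>\<^sup>+\<omega>. B \<omega> \<partial>M)"
    by (intro nn_integral_mono bnd)
  finally show ?thesis .
qed

lemma inner_bound:
  fixes M :: "'w measure" and \<xi> :: "nat \<Rightarrow> 'w \<Rightarrow> 's" and G :: "'v::euclidean_space \<Rightarrow> 's \<Rightarrow> 'v"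
    and grad :: "'v \<Rightarrow> 'v"
  assumes P: "prob_space M"
    and unbiased: "\<And>t x. integrable M (\<lambda>\<omega>. G x (\<xi> t \<omega>))
                      \<and> prob_space.expectation M (\<lambda>\<omega>. G x (\<xi> t \<omega>)) = grad x"
    and variance: "\<And>t x. integrable M (\<lambda>\<omega>. (norm (G x (\<xi> t \<omega>) - grad x))\<^sup>2)
                      \<and> prob_space.expectation M (\<lambda>\<omega>. (norm (G x (\<xi> t \<omega>) - grad x))\<^sup>2) \<le> \<sigma>\<^sup>2"
  shows "(\<integral>\<^sup>+\<omega>. ennreal ((norm (a *\<^sub>R w + b *\<^sub>R (G y (\<xi> t \<omega>) - grad y)))\<^sup>2) \<partial>M)
         \<le> ennreal (a\<^sup>2 * (norm w)\<^sup>2 + b\<^sup>2 * \<sigma>\<^sup>2)"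
proof -
  interpret prob_space M by (rule P)
  define e where "e = (\<lambda>\<omega>. G y (\<xi> t \<omega>) - grad y)"
  have ie: "integrable M e" unfolding e_def using unbiased[where t=t and x=y] by auto
  have Ee: "integral\<^sup>L M e = 0" unfolding e_def using unbiased[where t=t and x=y] by (simp add: prob_space)
  have ie2: "integrable M (\<lambda>\<omega>. (norm (e \<omega>))\<^sup>2)" unfolding e_def using variance[where t=t and x=y] by auto
  have Ee2: "integral\<^sup>L M (\<lambda>\<omega>. (norm (e \<omega>))\<^sup>2) \<le> \<sigma>\<^sup>2" unfolding e_def using variance[where t=t and x=y] by auto
  have pw: "(norm (a *\<^sub>R w + b *\<^sub>R e \<omega>))\<^sup>2 = a\<^sup>2 * (norm w)\<^sup>2 + (2 * a * b) * inner w (e \<omega>) + b\<^sup>2 * (norm (e \<omega>))\<^sup>2" for \<omega>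
    unfolding power2_norm_eq_inner by (simp add: inner_add_left inner_add_right inner_commute algebra_simps power2_eq_square)
  have iw: "integrable M (\<lambda>\<omega>. inner w (e \<omega>))" using ie by auto
  have int: "integrable M (\<lambda>\<omega>. a\<^sup>2 * (norm w)\<^sup>2 + (2 * a * b) * inner w (e \<omega>) + b\<^sup>2 * (norm (e \<omega>))\<^sup>2)"
    using iw ie2 by auto
  have val: "integral\<^sup>L M (\<lambda>\<omega>. a\<^sup>2 * (norm w)\<^sup>2 + (2 * a * b) * inner w (e \<omega>) + b\<^sup>2 * (norm (e \<omega>))\<^sup>2)
      = a\<^sup>2 * (norm w)\<^sup>2 + b\<^sup>2 * integral\<^sup>L M (\<lambda>\<omega>. (norm (e \<omega>))\<^sup>2)"
  proof -
    have "integral\<^sup>L M (\<lambda>\<omega>. inner w (e \<omega>)) = 0" using ie Ee by simp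
    then show ?thesis using iw ie2 by (simp add: prob_space)
  qed
  have "(\<integral>\<^sup>+\<omega>. ennreal ((norm (a *\<^sub>R w + b *\<^sub>R e \<omega>))\<^sup>2) \<partial>M)
     = (\<integral>\<^sup>+\<omega>. ennreal (a\<^sup>2 * (norm w)\<^sup>2 + (2 * a * b) * inner w (e \<omega>) + b\<^sup>2 * (norm (e \<omega>))\<^sup>2) \<partial>M)"
    by (simp add: pw)
  also have "\<dots> = ennreal (integral\<^sup>L M (\<lambda>\<omega>. a\<^sup>2 * (norm w)\<^sup>2 + (2 * a * b) * inner w (e \<omega>) + b\<^sup>2 * (norm (e \<omega>))\<^sup>2))"
    by (rule nn_integral_eq_integral[OF int]) (simp add: pw[symmetric])
  also have "\<dots> \<le> ennreal (a\<^sup>2 * (norm w)\<^sup>2 + b\<^sup>2 * \<sigma>\<^sup>2)"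
    using Ee2 unfolding val by (intro ennreal_leI add_left_mono mult_left_mono) auto
  finally show ?thesis unfolding e_def .
qed

definition etaF :: "nat \<Rightarrow> real" where "etaF t = 1 / (real t + 2) powr (3/4)"
definition rhoF :: "nat \<Rightarrow> real" where "rhoF t = 1 / sqrt (real t + 1)"

lemma etaF_pos: "etaF t > 0" by (simp add: etaF_def)
lemma etaF_le1: "etaF t \<le> 1"
proof -
  have "1 \<le> (real t + 2) powr (3/4)" by (rule ge_one_powr_ge_zero) auto
  then show ?thesis by (simp add: etaF_def)
qed
lemma rhoF_pos: "rhoF t > 0" by (simp add: rhoF_def)
lemma rhoF_le1: "rhoF t \<le> 1" by (simp add: rhoF_def)
lemma rhoF_0: "rhoF 0 = 1" by (simp add: rhoF_def)
lemma etaF_sq: "(etaF t)\<^sup>2 = (rhoF (Suc t))^3"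
proof -
  have "(etaF t)\<^sup>2 = 1 / (sqrt (real t + 2))^3" unfolding etaF_def by (rule eta_sq) simp
  moreover have "real (Suc t) + 1 = real t + 2" by simp
  ultimately show ?thesis by (simp add: rhoF_def power_divide add.commute)
qed

lemma young_rho:
  fixes \<rho> d z W :: real
  assumes r: "0 < \<rho>" "\<rho> \<le> 1" and d: "0 \<le> d" and z: "0 \<le> z" and W: "0 \<le> W" "W \<le> d + z"
  shows "(1 - \<rho>)\<^sup>2 * W\<^sup>2 \<le> (1 - \<rho>) * d\<^sup>2 + z\<^sup>2 / \<rho>"
proof -
  have "W\<^sup>2 \<le> (d + z)\<^sup>2" using W by (intro power_mono) auto
  also have "\<dots> \<le> (1 + \<rho>) * d\<^sup>2 + (1 + 1/\<rho>) * z\<^sup>2"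
  proof -
    have "0 \<le> (\<rho> * d - z)\<^sup>2 / \<rho>" using r by simp
    also have "(\<rho> * d - z)\<^sup>2 / \<rho> = \<rho> * d\<^sup>2 - 2 * d * z + z\<^sup>2 / \<rho>"
      using r by (simp add: field_simps power2_eq_square)
    finally show ?thesis by (simp add: algebra_simps power2_eq_square)
  qed
  finally have W2: "W\<^sup>2 \<le> (1 + \<rho>) * d\<^sup>2 + (1 + 1/\<rho>) * z\<^sup>2" .
  have "(1 - \<rho>)\<^sup>2 * W\<^sup>2 \<le> (1 - \<rho>)\<^sup>2 * ((1 + \<rho>) * d\<^sup>2 + (1 + 1/\<rho>) * z\<^sup>2)"
    using W2 by (intro mult_left_mono) auto
  also have "\<dots> = ((1 - \<rho>) * (1 - \<rho>\<^sup>2)) * d\<^sup>2 + ((1 - \<rho>)\<^sup>2 * (1 + \<rho>)) * (z\<^sup>2 / \<rho>)"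
    using r by (simp add: field_simps power2_eq_square)
  also have "\<dots> \<le> (1 - \<rho>) * d\<^sup>2 + 1 * (z\<^sup>2 / \<rho>)"
  proof (intro add_mono mult_right_mono)
    show "(1 - \<rho>) * (1 - \<rho>\<^sup>2) \<le> 1 - \<rho>" using r by (simp add: mult_left_le)
    have "(1 - \<rho>)\<^sup>2 * (1 + \<rho>) = (1 - \<rho>) * (1 - \<rho>\<^sup>2)" by (simp add: power2_eq_square algebra_simps)
    also have "\<dots> \<le> 1" using r by (smt (verit) mult_le_one power2_eq_square zero_le_mult_iff)
    finally show "(1 - \<rho>)\<^sup>2 * (1 + \<rho>) \<le> 1" .
  qed (use r in auto)
  finally show ?thesis by simp
qed

lemma bsfw_cong:
  "(\<And>i. i \<le> t \<Longrightarrow> g i = g' i) \<Longrightarrow> bsfw lmo K \<delta> eta rho minit g t = bsfw lmo K \<delta> eta rho minit g' t"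
proof (induction t)
  case 0 then show ?case by simp
next
  case (Suc t)
  then have "bsfw lmo K \<delta> eta rho minit g t = bsfw lmo K \<delta> eta rho minit g' t" by simp
  then show ?case using Suc.prems by (simp add: case_prod_beta Let_def)
qed

context
  fixes C :: "'v::euclidean_space set"
    and f :: "'v \<Rightarrow> real" and grad :: "'v \<Rightarrow> 'v"
    and L \<sigma> \<delta> :: real and K T :: nat and minit :: 'v
    and lmo :: "'v \<Rightarrow> 'v"
    and M :: "'w measure" and S :: "'s measure"
    and \<xi> :: "nat \<Rightarrow> 'w \<Rightarrow> 's" and G :: "'v \<Rightarrow> 's \<Rightarrow> 'v"
  assumes C: "compact C" "convex C" "C \<noteq> {}"
    and deriv: "\<And>x. (f has_derivative (\<lambda>h. inner (grad x) h)) (at x)"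
    and grad_cont: "continuous_on UNIV grad"
    and lipschitz: "\<forall>x\<in>C. \<forall>y\<in>C. norm (grad x - grad y) \<le> L * norm (x - y)"
    and lmo: "\<And>v. lmo v \<in> C \<and> (\<forall>s\<in>C. inner (lmo v) v \<le> inner s v)"
    and lmo_meas: "lmo \<in> borel_measurable borel"
    and K: "K \<ge> 1" and \<delta>: "0 < \<delta>" "\<delta> \<le> 1"
    and T: "T \<ge> 1"
    and P: "prob_space M"
    and \<xi>_meas: "\<And>t. \<xi> t \<in> measurable M S"
    and \<xi>_indep: "prob_space.indep_vars M (\<lambda>_. S) \<xi> UNIV"
    and G_meas: "(\<lambda>(x, z). G x z) \<in> borel_measurable (borel \<Otimes>\<^sub>M S)"
    and unbiased: "\<And>t x. integrable M (\<lambda>\<omega>. G x (\<xi> t \<omega>))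
                      \<and> prob_space.expectation M (\<lambda>\<omega>. G x (\<xi> t \<omega>)) = grad x"
    and variance: "\<And>t x. integrable M (\<lambda>\<omega>. (norm (G x (\<xi> t \<omega>) - grad x))\<^sup>2)
                      \<and> prob_space.expectation M (\<lambda>\<omega>. (norm (G x (\<xi> t \<omega>) - grad x))\<^sup>2) \<le> \<sigma>\<^sup>2"
begin

definition "L0 = max L 0"
definition "Dm = diameter C"
definition "Phi t h = bsfw lmo K \<delta> etaF rhoF minit (\<lambda>t y. G y (h t)) t"
definition "st \<omega> t = Phi t (\<lambda>i. \<xi> i \<omega>)"
definition "X \<omega> t = fst (st \<omega> t)"
definition "Mm \<omega> t = snd (st \<omega> t)"
definition "Del \<omega> t = norm (Mm \<omega> t - grad (X \<omega> t))"
definition "xn z t = bfw_step lmo K \<delta> (etaF t) (snd z) (fst z)"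
definition "Mh = max ((norm (0 - grad (lmo minit)))\<^sup>2) (24 * (\<sigma>\<^sup>2 + 2 * L\<^sup>2 * Dm\<^sup>2))"

lemma L0_nonneg: "L0 \<ge> 0" by (simp add: L0_def)
lemma lip0: "\<forall>x\<in>C. \<forall>y\<in>C. norm (grad x - grad y) \<le> L0 * norm (x - y)"
  using lipschitz unfolding L0_def by (meson max.cobounded1 mult_right_mono norm_ge_zero order_trans)

lemma bC: "bounded C" using C compact_imp_bounded by auto
lemma Dm_nonneg: "Dm \<ge> 0" unfolding Dm_def using bC by (rule diameter_ge_0)

lemma L0_D: "L0 * Dm\<^sup>2 = L * Dm\<^sup>2"
proof (cases "L \<ge> 0")
  case True then show ?thesis by (simp add: L0_def)
next
  case False
  have "Dm \<le> 0" unfolding Dm_def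
  proof (rule diameter_le)
    fix x y assume "x \<in> C" "y \<in> C"
    then have "0 \<le> L * norm (x - y)" using lipschitz by (meson norm_ge_zero order_trans)
    then show "norm (x - y) \<le> 0" using False by (simp add: mult_le_0_iff zero_le_mult_iff)
  qed (use C in auto)
  then have "Dm = 0" using Dm_nonneg by simp
  then show ?thesis by simp
qed

lemma st_0: "st \<omega> 0 = (lmo minit, 0)" by (simp add: st_def Phi_def)
lemma st_Suc: "st \<omega> (Suc t) = (xn (st \<omega> t) t,
   (1 - rhoF (Suc t)) *\<^sub>R Mm \<omega> t + rhoF (Suc t) *\<^sub>R G (xn (st \<omega> t) t) (\<xi> (Suc t) \<omega>))"
  unfolding st_def Phi_def Mm_def xn_def by (simp add: case_prod_beta Let_def)

lemma X_Suc: "X \<omega> (Suc t) = bfw_step lmo K \<delta> (etaF t) (Mm \<omega> t) (X \<omega> t)"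
  unfolding X_def using st_Suc[of \<omega> t] by (simp add: xn_def Mm_def X_def)

lemma XC: "X \<omega> t \<in> C"
  using path_bound(1)[where X="X \<omega>" and K=K and Mm="Mm \<omega>" and eta=etaF, OF C(1,2) deriv lip0 L0_nonneg lmo \<delta>(1)]
    X_Suc lmo etaF_pos etaF_le1 by (simp add: X_def st_0 less_imp_le)


lemma Phi_meas: "{..t} \<subseteq> I \<Longrightarrow> Phi t \<in> measurable (PiM I (\<lambda>_. S)) (borel \<Otimes>\<^sub>M borel)"
  unfolding Phi_def[abs_def] by (rule bsfw_meas[OF lmo_meas G_meas])

lemma xi_all_meas: "(\<lambda>\<omega> i. \<xi> i \<omega>) \<in> measurable M (PiM UNIV (\<lambda>_. S))"
  by (rule measurable_PiM_single') (auto intro: measurable_space[OF \<xi>_meas] \<xi>_meas)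

lemma st_meas[measurable]: "(\<lambda>\<omega>. st \<omega> t) \<in> measurable M (borel \<Otimes>\<^sub>M borel)"
  unfolding st_def using measurable_comp[OF xi_all_meas Phi_meas[of t UNIV]] by (simp add: comp_def)

lemma X_meas[measurable]: "(\<lambda>\<omega>. X \<omega> t) \<in> borel_measurable M"
  unfolding X_def by measurable
lemma Mm_meas[measurable]: "(\<lambda>\<omega>. Mm \<omega> t) \<in> borel_measurable M"
  unfolding Mm_def by measurable
lemma grad_meas[measurable]: "grad \<in> borel_measurable borel"
  using grad_cont by (rule borel_measurable_continuous_onI)
lemma Del_meas[measurable]: "(\<lambda>\<omega>. Del \<omega> t) \<in> borel_measurable M"
  unfolding Del_def by measurable

lemma indep_bound:
  assumes H[measurable]: "H \<in> borel_measurable ((borel \<Otimes>\<^sub>M borel) \<Otimes>\<^sub>M S)"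
    and B: "\<And>\<omega>. \<omega> \<in> space M \<Longrightarrow> (\<integral>\<^sup>+\<omega>'. H (st \<omega> t, \<xi> (Suc t) \<omega>') \<partial>M) \<le> B \<omega>"
  shows "(\<integral>\<^sup>+\<omega>. H (st \<omega> t, \<xi> (Suc t) \<omega>) \<partial>M) \<le> (\<integral>\<^sup>+\<omega>. B \<omega> \<partial>M)"
proof -
  interpret prob_space M by (rule P)
  have i1: "indep_var (PiM {..t} (\<lambda>_. S)) (\<lambda>\<omega>. restrict (\<lambda>i. \<xi> i \<omega>) {..t})
     (PiM {Suc t} (\<lambda>_. S)) (\<lambda>\<omega>. restrict (\<lambda>i. \<xi> i \<omega>) {Suc t})"
    by (rule indep_var_restrict[OF \<xi>_indep]) auto
  have e1: "Phi t (restrict (\<lambda>i. \<xi> i \<omega>) {..t}) = st \<omega> t" for \<omega>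
    unfolding st_def Phi_def by (intro bsfw_cong) auto
  have [measurable]: "Phi t \<in> measurable (PiM {..t} (\<lambda>_. S)) (borel \<Otimes>\<^sub>M borel)"
    by (rule Phi_meas) simp
  have [measurable]: "(\<lambda>h. h (Suc t)) \<in> measurable (PiM {Suc t} (\<lambda>_. S)) S" by measurable
  have hm: "(\<lambda>(a, b). H (Phi t a, b (Suc t))) \<in> borel_measurable (PiM {..t} (\<lambda>_. S) \<Otimes>\<^sub>M PiM {Suc t} (\<lambda>_. S))"
    by measurable
  have "(\<integral>\<^sup>+\<omega>. (\<lambda>(a, b). H (Phi t a, b (Suc t))) (restrict (\<lambda>i. \<xi> i \<omega>) {..t}, restrict (\<lambda>i. \<xi> i \<omega>) {Suc t}) \<partial>M)
      \<le> (\<integral>\<^sup>+\<omega>. B \<omega> \<partial>M)"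
    by (rule indep_nn_bound[OF i1 hm]) (simp add: e1 B)
  then show ?thesis by (simp add: e1)
qed


lemma G_comp_meas[measurable]:
  fixes a :: "'q \<Rightarrow> 'v"
  assumes [measurable]: "a \<in> borel_measurable N" "b \<in> measurable N S"
  shows "(\<lambda>p. G (a p) (b p)) \<in> borel_measurable N"
proof -
  note G_meas[measurable]
  have "(\<lambda>p. (\<lambda>(x, z). G x z) (a p, b p)) \<in> borel_measurable N" by measurable
  then show ?thesis by simp
qed

lemma xn_meas[measurable]: "(\<lambda>z. xn z t) \<in> borel_measurable (borel \<Otimes>\<^sub>M borel)"
  unfolding xn_def by (rule bfw_step_meas[OF lmo_meas]) measurable

lemma xn_eq: "xn (st \<omega> t) t = bfw_step lmo K \<delta> (etaF t) (Mm \<omega> t) (X \<omega> t)"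
  by (simp add: xn_def X_def Mm_def)

lemma X_Suc': "X \<omega> (Suc t) = xn (st \<omega> t) t" by (simp add: X_def st_Suc)
lemma Mm_Suc': "Mm \<omega> (Suc t) = (1 - rhoF (Suc t)) *\<^sub>R Mm \<omega> t + rhoF (Suc t) *\<^sub>R G (xn (st \<omega> t) t) (\<xi> (Suc t) \<omega>)"
  by (simp add: Mm_def st_Suc)

lemma Del_Suc: "Del \<omega> (Suc t) = norm ((1 - rhoF (Suc t)) *\<^sub>R (Mm \<omega> t - grad (xn (st \<omega> t) t))
    + rhoF (Suc t) *\<^sub>R (G (xn (st \<omega> t) t) (\<xi> (Suc t) \<omega>) - grad (xn (st \<omega> t) t)))"
proof -
  have "Mm \<omega> (Suc t) - grad (X \<omega> (Suc t)) = (1 - rhoF (Suc t)) *\<^sub>R (Mm \<omega> t - grad (xn (st \<omega> t) t))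
    + rhoF (Suc t) *\<^sub>R (G (xn (st \<omega> t) t) (\<xi> (Suc t) \<omega>) - grad (xn (st \<omega> t) t))"
    unfolding Mm_Suc' X_Suc' by (simp add: algebra_simps)
  then show ?thesis by (simp add: Del_def)
qed

lemma w_bound: "norm (Mm \<omega> t - grad (xn (st \<omega> t) t)) \<le> Del \<omega> t + L0 * etaF t * Dm"
proof -
  have xC: "X \<omega> t \<in> C" by (rule XC)
  note os = one_step[where m="Mm \<omega> t" and K=K, OF C(1,2) deriv lip0 L0_nonneg lmo \<delta>(1) xC
      less_imp_le[OF etaF_pos[of t]] etaF_le1[of t], folded xn_eq]
  have "norm (grad (X \<omega> t) - grad (xn (st \<omega> t) t)) \<le> L0 * norm (X \<omega> t - xn (st \<omega> t) t)"
    using lip0 xC os(1) by blast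
  also have "\<dots> \<le> L0 * (etaF t * Dm)"
    using os(2) L0_nonneg by (intro mult_left_mono) (auto simp: Dm_def norm_minus_commute)
  finally have "norm (grad (X \<omega> t) - grad (xn (st \<omega> t) t)) \<le> L0 * etaF t * Dm" by simp
  moreover have "norm (Mm \<omega> t - grad (xn (st \<omega> t) t)) \<le> Del \<omega> t + norm (grad (X \<omega> t) - grad (xn (st \<omega> t) t))"
    unfolding Del_def by (rule order_trans[OF _ norm_triangle_ineq]) simp
  ultimately show ?thesis by simp
qed

lemma Mh_bound: "\<sigma>\<^sup>2 + L0\<^sup>2 * Dm\<^sup>2 \<le> Mh / 24"
proof -
  have "L0\<^sup>2 \<le> L\<^sup>2" unfolding L0_def by (cases "L \<ge> 0") (auto simp: max_def)
  then have "L0\<^sup>2 * Dm\<^sup>2 \<le> 2 * L\<^sup>2 * Dm\<^sup>2"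
    by (smt (verit) mult_right_mono zero_le_power2)
  moreover have "24 * (\<sigma>\<^sup>2 + 2 * L\<^sup>2 * Dm\<^sup>2) \<le> Mh" unfolding Mh_def by simp
  ultimately show ?thesis by simp
qed

lemma Mh_nonneg: "Mh \<ge> 0" unfolding Mh_def by (simp add: le_max_iff_disj)

lemma Del_sq_bound: "(\<integral>\<^sup>+\<omega>. ennreal ((Del \<omega> t)\<^sup>2) \<partial>M) \<le> ennreal (Mh * rhoF t)"
proof (induction t)
  case 0
  interpret prob_space M by (rule P)
  have "Del \<omega> 0 = norm (0 - grad (lmo minit))" for \<omega> by (simp add: Del_def Mm_def X_def st_0)
  then have "(\<integral>\<^sup>+\<omega>. ennreal ((Del \<omega> 0)\<^sup>2) \<partial>M) = ennreal ((norm (0 - grad (lmo minit)))\<^sup>2)"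
    by (simp add: emeasure_space_1)
  also have "\<dots> \<le> ennreal (Mh * rhoF 0)" unfolding rhoF_0 Mh_def by (intro ennreal_leI) simp
  finally show ?case .
next
  case (Suc t)
  interpret prob_space M by (rule P)
  define \<rho> where "\<rho> = rhoF (Suc t)"
  have r: "0 < \<rho>" "\<rho> \<le> 1" unfolding \<rho>_def by (simp_all add: rhoF_pos rhoF_le1)
  define H where "H = (\<lambda>(z, s). ennreal ((norm ((1 - \<rho>) *\<^sub>R (snd z - grad (xn z t)) + \<rho> *\<^sub>R (G (xn z t) s - grad (xn z t))))\<^sup>2))"
  have Hm: "H \<in> borel_measurable ((borel \<Otimes>\<^sub>M borel) \<Otimes>\<^sub>M S)" unfolding H_def by measurable
  define B where "B = (\<lambda>\<omega>. ennreal ((1 - \<rho>) * (Del \<omega> t)\<^sup>2 + \<rho>\<^sup>2 * (L0\<^sup>2 * Dm\<^sup>2 + \<sigma>\<^sup>2)))"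
  have eqS: "ennreal ((Del \<omega> (Suc t))\<^sup>2) = H (st \<omega> t, \<xi> (Suc t) \<omega>)" for \<omega>
    unfolding H_def Del_Suc \<rho>_def by (simp add: Mm_def)
  have bnd: "(\<integral>\<^sup>+\<omega>'. H (st \<omega> t, \<xi> (Suc t) \<omega>') \<partial>M) \<le> B \<omega>" for \<omega>
  proof -
    define w where "w = Mm \<omega> t - grad (xn (st \<omega> t) t)"
    have "(\<integral>\<^sup>+\<omega>'. H (st \<omega> t, \<xi> (Suc t) \<omega>') \<partial>M)
        = (\<integral>\<^sup>+\<omega>'. ennreal ((norm ((1 - \<rho>) *\<^sub>R w + \<rho> *\<^sub>R (G (xn (st \<omega> t) t) (\<xi> (Suc t) \<omega>') - grad (xn (st \<omega> t) t))))\<^sup>2) \<partial>M)"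
      unfolding H_def w_def by (simp add: Mm_def)
    also have "\<dots> \<le> ennreal ((1 - \<rho>)\<^sup>2 * (norm w)\<^sup>2 + \<rho>\<^sup>2 * \<sigma>\<^sup>2)"
      by (rule inner_bound[where M=M and G=G and grad=grad and \<xi>=\<xi> and \<sigma>=\<sigma>, OF P unbiased variance])
    also have "\<dots> \<le> B \<omega>"
    proof -
      define z where "z = L0 * etaF t * Dm"
      have z0: "z \<ge> 0" unfolding z_def using L0_nonneg Dm_nonneg etaF_pos by (simp add: less_imp_le)
      have "(1 - \<rho>)\<^sup>2 * (norm w)\<^sup>2 \<le> (1 - \<rho>) * (Del \<omega> t)\<^sup>2 + z\<^sup>2 / \<rho>"
        by (rule young_rho[OF r _ z0]) (use w_bound[of \<omega> t] in \<open>auto simp: w_def z_def Del_def\<close>)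
      moreover have "z\<^sup>2 / \<rho> = \<rho>\<^sup>2 * (L0\<^sup>2 * Dm\<^sup>2)"
      proof -
        have "z\<^sup>2 = L0\<^sup>2 * Dm\<^sup>2 * \<rho>^3" unfolding z_def \<rho>_def etaF_sq[symmetric] by (simp add: power_mult_distrib)
        then show ?thesis using r by (simp add: power2_eq_square power3_eq_cube)
      qed
      ultimately show ?thesis unfolding B_def by (intro ennreal_leI) (simp add: algebra_simps)
    qed
    finally show ?thesis .
  qed
  have "(\<integral>\<^sup>+\<omega>. ennreal ((Del \<omega> (Suc t))\<^sup>2) \<partial>M) = (\<integral>\<^sup>+\<omega>. H (st \<omega> t, \<xi> (Suc t) \<omega>) \<partial>M)"
    by (simp add: eqS)
  also have "\<dots> \<le> (\<integral>\<^sup>+\<omega>. B \<omega> \<partial>M)" by (rule indep_bound[OF Hm bnd])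
  also have "(\<integral>\<^sup>+\<omega>. B \<omega> \<partial>M) = ennreal (1 - \<rho>) * (\<integral>\<^sup>+\<omega>. ennreal ((Del \<omega> t)\<^sup>2) \<partial>M) + ennreal (\<rho>\<^sup>2 * (L0\<^sup>2 * Dm\<^sup>2 + \<sigma>\<^sup>2))"
  proof -
    have "(\<integral>\<^sup>+\<omega>. B \<omega> \<partial>M) = (\<integral>\<^sup>+\<omega>. ennreal (1 - \<rho>) * ennreal ((Del \<omega> t)\<^sup>2) + ennreal (\<rho>\<^sup>2 * (L0\<^sup>2 * Dm\<^sup>2 + \<sigma>\<^sup>2)) \<partial>M)"
      unfolding B_def using r by (intro nn_integral_cong) (simp add: ennreal_mult)
    also have "\<dots> = (\<integral>\<^sup>+\<omega>. ennreal (1 - \<rho>) * ennreal ((Del \<omega> t)\<^sup>2) \<partial>M) + ennreal (\<rho>\<^sup>2 * (L0\<^sup>2 * Dm\<^sup>2 + \<sigma>\<^sup>2))"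
      by (subst nn_integral_add) (auto simp: emeasure_space_1)
    also have "\<dots> = ennreal (1 - \<rho>) * (\<integral>\<^sup>+\<omega>. ennreal ((Del \<omega> t)\<^sup>2) \<partial>M) + ennreal (\<rho>\<^sup>2 * (L0\<^sup>2 * Dm\<^sup>2 + \<sigma>\<^sup>2))"
      by (subst nn_integral_cmult) auto
    finally show ?thesis .
  qed
  also have "\<dots> \<le> ennreal (1 - \<rho>) * ennreal (Mh * rhoF t) + ennreal (\<rho>\<^sup>2 * (L0\<^sup>2 * Dm\<^sup>2 + \<sigma>\<^sup>2))"
    by (intro add_mono mult_left_mono Suc.IH) auto
  also have "\<dots> = ennreal ((1 - \<rho>) * (Mh * rhoF t) + \<rho>\<^sup>2 * (L0\<^sup>2 * Dm\<^sup>2 + \<sigma>\<^sup>2))"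
    using r Mh_nonneg rhoF_pos[of t] by (simp add: ennreal_plus ennreal_mult)
  also have "\<dots> \<le> ennreal (Mh * rhoF (Suc t))"
  proof (intro ennreal_leI)
    have "\<rho>\<^sup>2 * (L0\<^sup>2 * Dm\<^sup>2 + \<sigma>\<^sup>2) \<le> \<rho>\<^sup>2 * (Mh / 24)"
      using Mh_bound by (intro mult_left_mono) auto
    moreover have "Mh * ((1 - \<rho>) * rhoF t + \<rho>\<^sup>2 / 24) \<le> Mh * \<rho>"
      using R4[of t] Mh_nonneg unfolding \<rho>_def rhoF_def by (intro mult_left_mono) auto
    ultimately show "(1 - \<rho>) * (Mh * rhoF t) + \<rho>\<^sup>2 * (L0\<^sup>2 * Dm\<^sup>2 + \<sigma>\<^sup>2) \<le> Mh * rhoF (Suc t)"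
      unfolding \<rho>_def by (simp add: algebra_simps)
  qed
  finally show ?case .
qed


lemma Del_bound: "(\<integral>\<^sup>+\<omega>. ennreal (Del \<omega> t) \<partial>M) \<le> ennreal (sqrt (Mh * rhoF t))"
proof -
  interpret prob_space M by (rule P)
  define c where "c = Mh * rhoF t"
  have c0: "c \<ge> 0" unfolding c_def using Mh_nonneg rhoF_pos[of t] by simp
  have a: "(\<integral>\<^sup>+\<omega>. ennreal ((Del \<omega> t)\<^sup>2) \<partial>M) \<le> ennreal c" unfolding c_def by (rule Del_sq_bound)
  have Dn: "Del \<omega> t \<ge> 0" for \<omega> by (simp add: Del_def)
  show ?thesis
  proof (cases "c = 0")
    case True
    then have "(\<integral>\<^sup>+\<omega>. ennreal ((Del \<omega> t)\<^sup>2) \<partial>M) = 0" using a by simp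
    then have "AE \<omega> in M. ennreal ((Del \<omega> t)\<^sup>2) = 0" by (subst nn_integral_0_iff_AE[symmetric]) auto
    then have "AE \<omega> in M. ennreal (Del \<omega> t) = 0" by eventually_elim simp
    then have "(\<integral>\<^sup>+\<omega>. ennreal (Del \<omega> t) \<partial>M) = 0" by (subst nn_integral_0_iff_AE) auto
    then show ?thesis by simp
  next
    case False
    then have c1: "c > 0" using c0 by simp
    define s where "s = sqrt c"
    have s0: "s > 0" using c1 by (simp add: s_def)
    have pw: "ennreal (Del \<omega> t) \<le> ennreal (1 / (2 * s)) * ennreal ((Del \<omega> t)\<^sup>2) + ennreal (s / 2)" for \<omega>
    proof -
      have "0 \<le> (Del \<omega> t - s)\<^sup>2" by simp
      then have "Del \<omega> t \<le> 1 / (2 * s) * (Del \<omega> t)\<^sup>2 + s / 2"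
        using s0 by (simp add: field_simps power2_eq_square algebra_simps)
      then show ?thesis using s0 by (simp add: ennreal_mult[symmetric] ennreal_plus[symmetric] del: ennreal_plus)
    qed
    have "(\<integral>\<^sup>+\<omega>. ennreal (Del \<omega> t) \<partial>M) \<le> (\<integral>\<^sup>+\<omega>. ennreal (1 / (2 * s)) * ennreal ((Del \<omega> t)\<^sup>2) + ennreal (s / 2) \<partial>M)"
      by (intro nn_integral_mono pw)
    also have "\<dots> = ennreal (1 / (2 * s)) * (\<integral>\<^sup>+\<omega>. ennreal ((Del \<omega> t)\<^sup>2) \<partial>M) + ennreal (s / 2)"
      by (subst nn_integral_add) (auto simp: nn_integral_cmult emeasure_space_1)
    also have "\<dots> \<le> ennreal (1 / (2 * s)) * ennreal c + ennreal (s / 2)"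
      by (intro add_mono mult_left_mono a) auto
    also have "\<dots> = ennreal (1 / (2 * s) * c + s / 2)"
      using s0 c0 by (simp add: ennreal_mult[symmetric] del: ennreal_plus) (simp add: ennreal_plus)
    also have "1 / (2 * s) * c + s / 2 = s"
    proof -
      have "c = s * s" using c0 by (simp add: s_def)
      then show ?thesis using s0 by (simp add: field_simps)
    qed
    finally show ?thesis by (simp add: s_def c_def)
  qed
qed

definition "mingap \<omega> = Min ((\<lambda>t. fw_gap C grad (X \<omega> t)) ` {0..<T})"

lemma gap_meas[measurable]: "(\<lambda>\<omega>. fw_gap C grad (X \<omega> t)) \<in> borel_measurable M"
proof -
  note lmo_meas[measurable]
  show ?thesis unfolding gap_eq[OF lmo] by measurable
qed

lemma mingap_meas[measurable]: "mingap \<in> borel_measurable M"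
  unfolding mingap_def[abs_def] by measurable

lemma mingap_in: "mingap \<omega> \<in> (\<lambda>t. fw_gap C grad (X \<omega> t)) ` {0..<T}"
  unfolding mingap_def using T by (intro Min_in) auto

lemma mingap_nonneg: "mingap \<omega> \<ge> 0"
  using mingap_in[of \<omega>] gap_nonneg[OF lmo XC] by auto

lemma mingap_integrable: "integrable M mingap"
proof -
  interpret prob_space M by (rule P)
  have "compact (grad ` C)" using C(1) grad_cont by (intro compact_continuous_image) (auto intro: continuous_on_subset)
  then obtain Gm where Gm: "\<And>x. x \<in> C \<Longrightarrow> norm (grad x) \<le> Gm"
    using compact_imp_bounded bounded_iff by (metis image_eqI)
  have gb: "fw_gap C grad x \<le> Gm * Dm" if "x \<in> C" for x
  proof -
    have "fw_gap C grad x = inner (grad x) (x - lmo (grad x))" by (rule gap_eq[OF lmo])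
    also have "\<dots> \<le> norm (grad x) * norm (x - lmo (grad x))" by (rule norm_cauchy_schwarz)
    also have "\<dots> \<le> Gm * Dm"
      using Gm[OF that] diameter_bounded_bound[OF bC that, of "lmo (grad x)"] lmo
      by (intro mult_mono) (auto simp: Dm_def dist_norm intro: order_trans[OF norm_ge_zero])
    finally show ?thesis .
  qed
  have "norm (mingap \<omega>) \<le> Gm * Dm" for \<omega>
    using mingap_in[of \<omega>] gb XC mingap_nonneg[of \<omega>] by auto
  then show ?thesis by (intro integrable_const_bound[where B="Gm * Dm"]) auto
qed


definition "F0 = f (lmo minit) - (INF x\<in>C. f x)"
definition "Seta = (\<Sum>t<T. etaF t)"

lemma f_bdd: "bdd_below (f ` C)"
proof -
  have "continuous_on C f"
    using deriv has_derivative_continuous by (blast intro: continuous_at_imp_continuous_on)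
  then have "compact (f ` C)" using C(1) by (rule compact_continuous_image)
  then show ?thesis by (intro bounded_imp_bdd_below compact_imp_bounded)
qed

lemma fstar_le: "x \<in> C \<Longrightarrow> (INF x\<in>C. f x) \<le> f x"
  using f_bdd by (rule cINF_lower2) auto

lemma F0_nonneg: "F0 \<ge> 0"
  unfolding F0_def using fstar_le[of "lmo minit"] lmo by simp

lemma Seta_pos: "Seta > 0"
  unfolding Seta_def using T etaF_pos by (intro sum_pos) (auto simp: lessThan_empty_iff)

lemma pathwise:
  "mingap \<omega> \<le> (F0 + L0 / 2 * Dm\<^sup>2 * (\<Sum>t<T. (etaF t)\<^sup>2)) / Seta + (\<Sum>t<T. (2 * etaF t * Dm / Seta) * Del \<omega> t)"
proof -
  note pb = path_bound(2)[where X="X \<omega>" and Mm="Mm \<omega>" and eta=etaF and T=T and K=K,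
      OF C(1,2) deriv lip0 L0_nonneg lmo \<delta>(1)]
  have X0: "X \<omega> 0 \<in> C" using lmo by (simp add: X_def st_0)
  have pb2: "(\<Sum>t<T. etaF t * fw_gap C grad (X \<omega> t)) \<le> f (X \<omega> 0) - f (X \<omega> T)
          + (\<Sum>t<T. 2 * etaF t * Dm * Del \<omega> t + L0 / 2 * (etaF t)\<^sup>2 * Dm\<^sup>2)"
    using pb[OF X0 X_Suc less_imp_le[OF etaF_pos] etaF_le1] by (simp add: Dm_def Del_def)
  have "mingap \<omega> * Seta = (\<Sum>t<T. etaF t * mingap \<omega>)"
    unfolding Seta_def by (simp add: sum_distrib_right mult.commute)
  also have "\<dots> \<le> (\<Sum>t<T. etaF t * fw_gap C grad (X \<omega> t))"
  proof (intro sum_mono mult_left_mono)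
    fix t assume "t \<in> {..<T}"
    then show "mingap \<omega> \<le> fw_gap C grad (X \<omega> t)" unfolding mingap_def by (intro Min_le) auto
  qed (simp add: less_imp_le[OF etaF_pos])
  also have "\<dots> \<le> F0 + ((\<Sum>t<T. 2 * etaF t * Dm * Del \<omega> t) + L0 / 2 * Dm\<^sup>2 * (\<Sum>t<T. (etaF t)\<^sup>2))"
  proof -
    have "f (X \<omega> 0) - f (X \<omega> T) \<le> F0" unfolding F0_def using fstar_le[OF XC[of \<omega> T]] by (simp add: X_def st_0)
    moreover have "(\<Sum>t<T. 2 * etaF t * Dm * Del \<omega> t + L0 / 2 * (etaF t)\<^sup>2 * Dm\<^sup>2)
        = (\<Sum>t<T. 2 * etaF t * Dm * Del \<omega> t) + L0 / 2 * Dm\<^sup>2 * (\<Sum>t<T. (etaF t)\<^sup>2)"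
      by (simp add: sum.distrib sum_distrib_left mult_ac)
    ultimately show ?thesis using pb2 by linarith
  qed
  finally have "mingap \<omega> \<le> (F0 + ((\<Sum>t<T. 2 * etaF t * Dm * Del \<omega> t) + L0 / 2 * Dm\<^sup>2 * (\<Sum>t<T. (etaF t)\<^sup>2))) / Seta"
    using Seta_pos by (simp add: pos_le_divide_eq)
  also have "\<dots> = (F0 + L0 / 2 * Dm\<^sup>2 * (\<Sum>t<T. (etaF t)\<^sup>2)) / Seta + (\<Sum>t<T. (2 * etaF t * Dm / Seta) * Del \<omega> t)"
    by (simp add: add_divide_distrib sum_divide_distrib)
  finally show ?thesis .
qed

lemma final_real:
  "(F0 + L0 / 2 * Dm\<^sup>2 * (\<Sum>t<T. (etaF t)\<^sup>2)) / Seta + (\<Sum>t<T. (2 * etaF t * Dm / Seta) * sqrt (Mh * rhoF t))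
   \<le> (F0 + 2 * Dm * sqrt Mh * (1 + ln (real T)) + L * Dm\<^sup>2) / (4 * ((real T + 2) powr (1/4) - 2 powr (1/4)))"
proof -
  define Q where "Q = (\<Sum>t<T. etaF t * sqrt (rhoF t))"
  define E2 where "E2 = (\<Sum>t<T. (etaF t)\<^sup>2)"
  define N where "N = F0 + 2 * Dm * sqrt Mh * (1 + ln (real T)) + L * Dm\<^sup>2"
  define den where "den = 4 * ((real T + 2) powr (1/4) - 2 powr (1/4))"
  have Q: "Q \<le> 1 + ln (real T)" unfolding Q_def etaF_def rhoF_def using R2[OF T] by simp
  have E2: "E2 \<le> 2" unfolding E2_def etaF_def using R3 by simp
  have den_le: "den \<le> Seta" unfolding den_def Seta_def etaF_def using R1 by simp
  have den_pos: "den > 0" unfolding den_def using T by (simp add: powr_less_mono2)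
  have lnT: "ln (real T) \<ge> 0" using T by simp
  have "(\<Sum>t<T. (2 * etaF t * Dm / Seta) * sqrt (Mh * rhoF t)) = 2 * Dm * sqrt Mh * Q / Seta"
    unfolding Q_def by (simp add: sum_distrib_left sum_divide_distrib real_sqrt_mult mult_ac)
  then have lhs: "(F0 + L0 / 2 * Dm\<^sup>2 * E2) / Seta + (\<Sum>t<T. (2 * etaF t * Dm / Seta) * sqrt (Mh * rhoF t))
      = (F0 + L0 / 2 * Dm\<^sup>2 * E2 + 2 * Dm * sqrt Mh * Q) / Seta"
    by (simp add: add_divide_distrib)
  have num: "F0 + L0 / 2 * Dm\<^sup>2 * E2 + 2 * Dm * sqrt Mh * Q \<le> N"
  proof -
    have "L0 / 2 * Dm\<^sup>2 * E2 = (L0 * Dm\<^sup>2) * (E2 / 2)" by simp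
    also have "\<dots> \<le> (L0 * Dm\<^sup>2) * 1" using E2 L0_nonneg by (intro mult_left_mono) auto
    finally have "L0 / 2 * Dm\<^sup>2 * E2 \<le> (L0 * Dm\<^sup>2) * 1" .
    then have "L0 / 2 * Dm\<^sup>2 * E2 \<le> L * Dm\<^sup>2" unfolding mult_1_right L0_D .
    moreover have "2 * Dm * sqrt Mh * Q \<le> 2 * Dm * sqrt Mh * (1 + ln (real T))"
      using Q Dm_nonneg Mh_nonneg by (intro mult_left_mono) auto
    ultimately show ?thesis unfolding N_def by linarith
  qed
  have LD: "L * Dm\<^sup>2 \<ge> 0" using L0_D L0_nonneg by (metis mult_nonneg_nonneg zero_le_power2)
  have "2 * Dm * sqrt Mh * (1 + ln (real T)) \<ge> 0" using Dm_nonneg Mh_nonneg lnT by simp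
  then have N0: "N \<ge> 0" unfolding N_def using F0_nonneg LD by linarith
  have "(F0 + L0 / 2 * Dm\<^sup>2 * E2 + 2 * Dm * sqrt Mh * Q) / Seta \<le> N / Seta"
    using num Seta_pos by (intro divide_right_mono) auto
  also have "\<dots> \<le> N / den" using N0 den_pos den_le by (intro divide_left_mono) auto
  finally show ?thesis using lhs unfolding E2_def N_def den_def by simp
qed

lemma final:
  "integral\<^sup>L M mingap \<le> (F0 + 2 * Dm * sqrt Mh * (1 + ln (real T)) + L * Dm\<^sup>2) / (4 * ((real T + 2) powr (1/4) - 2 powr (1/4)))"
proof -
  interpret prob_space M by (rule P)
  define A where "A = (F0 + L0 / 2 * Dm\<^sup>2 * (\<Sum>t<T. (etaF t)\<^sup>2)) / Seta"
  define c where "c = (\<lambda>t. 2 * etaF t * Dm / Seta)"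
  have A0: "A \<ge> 0" unfolding A_def using F0_nonneg L0_nonneg Seta_pos
    by (intro divide_nonneg_pos add_nonneg_nonneg mult_nonneg_nonneg sum_nonneg) auto
  have c0: "c t \<ge> 0" for t unfolding c_def using etaF_pos[of t] Dm_nonneg Seta_pos by simp
  have Dn: "Del \<omega> t \<ge> 0" for \<omega> t by (simp add: Del_def)
  have "(\<integral>\<^sup>+\<omega>. ennreal (mingap \<omega>) \<partial>M) \<le> (\<integral>\<^sup>+\<omega>. ennreal A + (\<Sum>t<T. ennreal (c t) * ennreal (Del \<omega> t)) \<partial>M)"
  proof (intro nn_integral_mono)
    fix \<omega>
    have "ennreal (mingap \<omega>) \<le> ennreal (A + (\<Sum>t<T. c t * Del \<omega> t))"
      using pathwise[of \<omega>] unfolding A_def c_def by (intro ennreal_leI) simp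
    also have "\<dots> = ennreal A + ennreal (\<Sum>t<T. c t * Del \<omega> t)"
      using A0 c0 Dn by (simp add: sum_nonneg)
    also have "ennreal (\<Sum>t<T. c t * Del \<omega> t) = (\<Sum>t<T. ennreal (c t * Del \<omega> t))"
      using c0 Dn by (simp add: sum_ennreal)
    also have "\<dots> = (\<Sum>t<T. ennreal (c t) * ennreal (Del \<omega> t))"
      using c0 Dn by (intro sum.cong refl) (simp add: ennreal_mult)
    finally show "ennreal (mingap \<omega>) \<le> ennreal A + (\<Sum>t<T. ennreal (c t) * ennreal (Del \<omega> t))" .
  qed
  also have "\<dots> = ennreal A + (\<Sum>t<T. ennreal (c t) * (\<integral>\<^sup>+\<omega>. ennreal (Del \<omega> t) \<partial>M))"
    by (subst nn_integral_add) (auto simp: nn_integral_sum nn_integral_cmult emeasure_space_1)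
  also have "\<dots> \<le> ennreal A + (\<Sum>t<T. ennreal (c t) * ennreal (sqrt (Mh * rhoF t)))"
    by (intro add_mono sum_mono mult_left_mono Del_bound) auto
  also have "(\<Sum>t<T. ennreal (c t) * ennreal (sqrt (Mh * rhoF t))) = (\<Sum>t<T. ennreal (c t * sqrt (Mh * rhoF t)))"
    using c0 by (intro sum.cong refl) (simp add: ennreal_mult')
  also have "\<dots> = ennreal (\<Sum>t<T. c t * sqrt (Mh * rhoF t))"
    using c0 Mh_nonneg rhoF_pos by (intro sum_ennreal) (simp add: less_imp_le)
  also have "ennreal A + \<dots> = ennreal (A + (\<Sum>t<T. c t * sqrt (Mh * rhoF t)))"
  proof -
    have "(\<Sum>t<T. c t * sqrt (Mh * rhoF t)) \<ge> 0"
      using c0 Mh_nonneg rhoF_pos by (intro sum_nonneg) (simp add: less_imp_le)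
    then show ?thesis using A0 by simp
  qed
  finally have nn: "(\<integral>\<^sup>+\<omega>. ennreal (mingap \<omega>) \<partial>M) \<le> ennreal (A + (\<Sum>t<T. c t * sqrt (Mh * rhoF t)))" .
  have R0: "A + (\<Sum>t<T. c t * sqrt (Mh * rhoF t)) \<ge> 0"
    using A0 c0 Mh_nonneg rhoF_pos by (intro add_nonneg_nonneg sum_nonneg mult_nonneg_nonneg real_sqrt_ge_zero) (auto simp: less_imp_le)
  have "integral\<^sup>L M mingap = enn2real (\<integral>\<^sup>+\<omega>. ennreal (mingap \<omega>) \<partial>M)"
    by (rule integral_eq_nn_integral) (auto simp: mingap_nonneg)
  also have "\<dots> \<le> enn2real (ennreal (A + (\<Sum>t<T. c t * sqrt (Mh * rhoF t))))"
    using nn by (intro enn2real_mono) auto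
  also have "\<dots> = A + (\<Sum>t<T. c t * sqrt (Mh * rhoF t))" using R0 by simp
  also have "\<dots> \<le> (F0 + 2 * Dm * sqrt Mh * (1 + ln (real T)) + L * Dm\<^sup>2) / (4 * ((real T + 2) powr (1/4) - 2 powr (1/4)))"
    unfolding A_def c_def by (rule final_real)
  finally show ?thesis .
qed

end

theorem theorem15:
  fixes C :: "'v::euclidean_space set"
    and f :: "'v \<Rightarrow> real" and grad :: "'v \<Rightarrow> 'v"
    and L \<sigma> \<delta> :: real and K T :: nat and minit :: 'v
    and lmo :: "'v \<Rightarrow> 'v"
    and M :: "'w measure" and S :: "'s measure"
    and \<xi> :: "nat \<Rightarrow> 'w \<Rightarrow> 's" and G :: "'v \<Rightarrow> 's \<Rightarrow> 'v"
  assumes C: "compact C" "convex C" "C \<noteq> {}"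
    and deriv: "\<And>x. (f has_derivative (\<lambda>h. inner (grad x) h)) (at x)"
    and grad_cont: "continuous_on UNIV grad"
    and lipschitz: "\<forall>x\<in>C. \<forall>y\<in>C. norm (grad x - grad y) \<le> L * norm (x - y)"
    and lmo: "\<And>v. lmo v \<in> C \<and> (\<forall>s\<in>C. inner (lmo v) v \<le> inner s v)"
    and lmo_meas: "lmo \<in> borel_measurable borel"
    and K: "K \<ge> 1" and \<delta>: "0 < \<delta>" "\<delta> \<le> 1"
    and T: "T \<ge> 1"
    and P: "prob_space M"
    and \<xi>_meas: "\<And>t. \<xi> t \<in> measurable M S"
    and \<xi>_indep: "prob_space.indep_vars M (\<lambda>_. S) \<xi> UNIV"
    and G_meas: "(\<lambda>(x, z). G x z) \<in> borel_measurable (borel \<Otimes>\<^sub>M S)"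
    and unbiased: "\<And>t x. integrable M (\<lambda>\<omega>. G x (\<xi> t \<omega>))
                      \<and> prob_space.expectation M (\<lambda>\<omega>. G x (\<xi> t \<omega>)) = grad x"
    and variance: "\<And>t x. integrable M (\<lambda>\<omega>. (norm (G x (\<xi> t \<omega>) - grad x))\<^sup>2)
                      \<and> prob_space.expectation M (\<lambda>\<omega>. (norm (G x (\<xi> t \<omega>) - grad x))\<^sup>2) \<le> \<sigma>\<^sup>2"
  shows
    "let D = diameter C;
         fstar = (INF x\<in>C. f x);
         eta = (\<lambda>t::nat. 1 / (real t + 2) powr (3/4));
         rho = (\<lambda>t::nat. 1 / sqrt (real t + 1));
         x = (\<lambda>\<omega> t. fst (bsfw lmo K \<delta> eta rho minit (\<lambda>t y. G y (\<xi> t \<omega>)) t));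
         x0 = lmo minit;
         m0 = (0::'v);
         F0 = f x0 - fstar;
         Mh = max ((norm (m0 - grad x0))\<^sup>2) (24 * (\<sigma>\<^sup>2 + 2 * L\<^sup>2 * D\<^sup>2));
         mingap = (\<lambda>\<omega>. Min ((\<lambda>t. fw_gap C grad (x \<omega> t)) ` {0..<T}))
     in integrable M mingap \<and>
        prob_space.expectation M mingap
          \<le> (F0 + 2 * D * sqrt Mh * (1 + ln (real T)) + L * D\<^sup>2)
              / (4 * ((real T + 2) powr (1/4) - 2 powr (1/4)))"
proof -
  note fin = final[OF assms] and int = mingap_integrable[OF assms]
  show ?thesis unfolding Let_def
    using fin int by (simp add: mingap_def[OF assms, abs_def] X_def[OF assms, abs_def] st_def[OF assms, abs_def] Phi_def[OF assms, abs_def]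
      F0_def[OF assms] Dm_def[OF assms] Mh_def[OF assms] etaF_def[abs_def] rhoF_def[abs_def])
qed

end
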